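(* Let $m,n$ be positive integers, $u,v\ge0$ and $t\le 1$. There is a universal constant $C>0$ such that, with $J_k = C\log(en)\big(k + \frac{u\sqrt{nk}}{\tau}\big)$, for every $\tau>0$ and every integer $1\le k<m$, $$\log\mathcal{N}(\mathcal{A}(m,n,u,v,t),\tau) \leq C\Big(J_k + \sqrt{J_k}\frac{v\sqrt m}{\tau\sqrt k}\Big)\Big(\log\Big(J_k + \sqrt{J_k}\frac{v\sqrt m}{\tau\sqrt k}\Big) + \log(emn/\tau)\Big),$$ whereas for $k=m$, $$\log\mathcal{N}(\mathcal{A}(m,n,u,v,t),\tau) \leq C J_k\big(\log J_k + \log(emn/\tau)\big).$$
   Context: For $\theta\in\mathbb{R}^{m\times n}$: $\mathrm{TV}_r(\theta) = \sum_{i\in[m]}\sum_{j\in[n-1]}|\theta[i,j+1]-\theta[i,j]|$, $\mathrm{TV}_c(\theta) = \mathrm{TV}_r(\theta^T)$, and $\mathcal{A}(m,n,u,v,t) = \{\theta\in\mathbb{R}^{m\times n}: \mathrm{TV}_r(\theta)\le u,\ \mathrm{TV}_c(\theta)\le v,\ \|\theta\|\le t\}$ with $\|\cdot\|$ the Frobenius norm. $\mathcal{N}(A,\tau)$ is the minimum number of Frobenius-norm balls of radius $\tau$ needed to cover $A$. *)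

theory Defs
  imports "HOL-Analysis.Analysis"
begin

text \<open>An m x n real matrix is represented as a function nat => nat => real that
  vanishes outside the index range {0..<m} x {0..<n}.\<close>

definition mats :: "nat \<Rightarrow> nat \<Rightarrow> (nat \<Rightarrow> nat \<Rightarrow> real) set" where
  "mats m n = {\<theta>. \<forall>i j. (m \<le> i \<or> n \<le> j) \<longrightarrow> \<theta> i j = 0}"

definition frob :: "nat \<Rightarrow> nat \<Rightarrow> (nat \<Rightarrow> nat \<Rightarrow> real) \<Rightarrow> real" where
  "frob m n \<theta> = sqrt (\<Sum>i<m. \<Sum>j<n. (\<theta> i j)\<^sup>2)"

definition mtrans :: "(nat \<Rightarrow> nat \<Rightarrow> real) \<Rightarrow> (nat \<Rightarrow> nat \<Rightarrow> real)" where
  "mtrans \<theta> = (\<lambda>i j. \<theta> j i)"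

definition TV_r :: "nat \<Rightarrow> nat \<Rightarrow> (nat \<Rightarrow> nat \<Rightarrow> real) \<Rightarrow> real" where
  "TV_r m n \<theta> = (\<Sum>i<m. \<Sum>j<n - 1. \<bar>\<theta> i (j + 1) - \<theta> i j\<bar>)"

definition TV_c :: "nat \<Rightarrow> nat \<Rightarrow> (nat \<Rightarrow> nat \<Rightarrow> real) \<Rightarrow> real" where
  "TV_c m n \<theta> = TV_r n m (mtrans \<theta>)"

definition calA :: "nat \<Rightarrow> nat \<Rightarrow> real \<Rightarrow> real \<Rightarrow> real \<Rightarrow> (nat \<Rightarrow> nat \<Rightarrow> real) set" where
  "calA m n u v t = {\<theta> \<in> mats m n. TV_r m n \<theta> \<le> u \<and> TV_c m n \<theta> \<le> v \<and> frob m n \<theta> \<le> t}"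

text \<open>Covering number of A \<subseteq> R^{m x n} by Frobenius balls of radius \<tau> (closed balls,
  centres anywhere in R^{m x n}).\<close>
definition covnum :: "nat \<Rightarrow> nat \<Rightarrow> (nat \<Rightarrow> nat \<Rightarrow> real) set \<Rightarrow> real \<Rightarrow> nat" where
  "covnum m n A \<tau> = (INF S \<in> {S. finite S \<and> S \<subseteq> mats m n \<and>
       A \<subseteq> (\<Union>c\<in>S. {\<theta> \<in> mats m n. frob m n (\<lambda>i j. \<theta> i j - c i j) \<le> \<tau>})}. card S)"

end

theory Submission
  imports Defs "HOL-Library.FuncSet"
begin

fun stk :: "real \<Rightarrow> (real \<Rightarrow> real) \<Rightarrow> real \<Rightarrow> (nat \<Rightarrow> real) \<Rightarrow> nat \<Rightarrow> real" where
  "stk d q p x 0 = (if \<bar>x 0 - p\<bar> \<le> d then p else q (x 0))"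
| "stk d q p x (Suc i) = (if \<bar>x (Suc i) - stk d q p x i\<bar> \<le> d then stk d q p x i else q (x (Suc i)))"

definition pv :: "real \<Rightarrow> (real \<Rightarrow> real) \<Rightarrow> real \<Rightarrow> (nat \<Rightarrow> real) \<Rightarrow> nat \<Rightarrow> real" where
  "pv d q p x i = (case i of 0 \<Rightarrow> p | Suc l \<Rightarrow> stk d q p x l)"

definition nov :: "real \<Rightarrow> (real \<Rightarrow> real) \<Rightarrow> real \<Rightarrow> (nat \<Rightarrow> real) \<Rightarrow> nat \<Rightarrow> bool" where
  "nov d q p x i \<longleftrightarrow> d < \<bar>x i - pv d q p x i\<bar>"

definition W :: "real \<Rightarrow> (nat \<Rightarrow> real) \<Rightarrow> nat \<Rightarrow> real" where
  "W y x N = (\<Sum>l<N. \<bar>x l - case_nat y x l\<bar>)"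

lemma stk_eq: "stk d q p x i = (if nov d q p x i then q (x i) else pv d q p x i)"
  by (cases i) (auto simp: nov_def pv_def)

lemma pv_Suc: "pv d q p x (Suc i) = stk d q p x i" by (simp add: pv_def)
lemma pv_0: "pv d q p x 0 = p" by (simp add: pv_def)

lemma stk_err:
  assumes "\<And>z. \<bar>q z - z\<bar> \<le> d"
  shows "\<bar>stk d q p x i - x i\<bar> \<le> d"
  using assms[of "x i"] by (cases i) auto

lemma W_nonneg: "0 \<le> W y x N" unfolding W_def by (auto intro: sum_nonneg)

lemma W_mono: "a \<le> b \<Longrightarrow> W y x a \<le> W y x b"
  unfolding W_def by (rule sum_mono2) auto

lemma W_Suc: "W y x (Suc N) = W y x N + \<bar>x N - case_nat y x N\<bar>"
  unfolding W_def by simp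

lemma W_tri:
  assumes "a \<le> b"
  shows "\<bar>case_nat y x b - case_nat y x a\<bar> \<le> W y x b - W y x a"
  using assms
proof (induction b)
  case 0 then show ?case by simp
next
  case (Suc b)
  show ?case
  proof (cases "a = Suc b")
    case True then show ?thesis by simp
  next
    case False
    then have "a \<le> b" using Suc by simp
    with Suc.IH have ih: "\<bar>case_nat y x b - case_nat y x a\<bar> \<le> W y x b - W y x a" by simp
    have "\<bar>case_nat y x (Suc b) - case_nat y x a\<bar> \<le> \<bar>x b - case_nat y x b\<bar> + \<bar>case_nat y x b - case_nat y x a\<bar>"
      by simp
    then show ?thesis using ih W_Suc[of y x b] by linarith
  qed
qed

lemma W_first: "W (x 0) x N = (\<Sum>l<N-1. \<bar>x (Suc l) - x l\<bar>)"
proof (cases N)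
  case 0 then show ?thesis by (simp add: W_def)
next
  case (Suc M)
  have "W (x 0) x (Suc M) = (\<Sum>l<M. \<bar>x (Suc l) - case_nat (x 0) x (Suc l)\<bar>) + \<bar>x 0 - x 0\<bar>"
    unfolding W_def by (subst sum.lessThan_Suc_shift) simp
  then show ?thesis using Suc by simp
qed

lemma count_inv:
  assumes q: "\<And>z. \<bar>q z - z\<bar> \<le> e" and p: "\<bar>p - y\<bar> \<le> e"
  shows "\<exists>lst\<le>N. \<bar>pv d q p x N - case_nat y x lst\<bar> \<le> e \<and>
     real (card {i. i < N \<and> nov d q p x i}) * (d - e) \<le> W y x lst"
proof (induction N)
  case 0
  show ?case by (rule exI[of _ 0]) (simp add: pv_0 p W_def)
next
  case (Suc N)
  then obtain lst where l: "lst \<le> N" "\<bar>pv d q p x N - case_nat y x lst\<bar> \<le> e"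
    "real (card {i. i < N \<and> nov d q p x i}) * (d - e) \<le> W y x lst" by blast
  show ?case
  proof (cases "nov d q p x N")
    case False
    have "{i. i < Suc N \<and> nov d q p x i} = {i. i < N \<and> nov d q p x i}"
      using False less_Suc_eq by auto
    moreover have "pv d q p x (Suc N) = pv d q p x N" using False by (simp add: pv_Suc stk_eq)
    ultimately show ?thesis using l by (intro exI[of _ lst]) auto
  next
    case True
    have st: "{i. i < Suc N \<and> nov d q p x i} = insert N {i. i < N \<and> nov d q p x i}"
      using True less_Suc_eq by auto
    have c: "card {i. i < Suc N \<and> nov d q p x i} = Suc (card {i. i < N \<and> nov d q p x i})"
      unfolding st by (subst card_insert_disjoint) auto
    have pvS: "pv d q p x (Suc N) = q (x N)" using True by (simp add: pv_Suc stk_eq)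
    have nv: "d < \<bar>x N - pv d q p x N\<bar>" using True by (simp add: nov_def)
    have tri: "\<bar>case_nat y x (Suc N) - case_nat y x lst\<bar> \<le> W y x (Suc N) - W y x lst"
      using W_tri[of lst "Suc N" y x] l(1) by simp
    have "d - e < \<bar>case_nat y x (Suc N) - case_nat y x lst\<bar>"
      using nv l(2) by simp
    then have "real (card {i. i < Suc N \<and> nov d q p x i}) * (d - e) \<le> W y x (Suc N)"
      unfolding c using l(3) tri by (simp add: algebra_simps)
    moreover have "\<bar>pv d q p x (Suc N) - case_nat y x (Suc N)\<bar> \<le> e" using pvS q[of "x N"] by simp
    ultimately show ?thesis by (intro exI[of _ "Suc N"]) auto
  qed
qed

lemma count_bound:
  assumes q: "\<And>z. \<bar>q z - z\<bar> \<le> e" and p: "\<bar>p - y\<bar> \<le> e" and de: "e < d"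
  shows "real (card {i. i < N \<and> nov d q p x i}) \<le> W y x N / (d - e)"
proof -
  obtain lst where "lst \<le> N" "real (card {i. i < N \<and> nov d q p x i}) * (d - e) \<le> W y x lst"
    using count_inv[OF q p, of N d x] by blast
  then have "real (card {i. i < N \<and> nov d q p x i}) * (d - e) \<le> W y x N"
    using W_mono by (meson order_trans)
  then show ?thesis using de by (simp add: field_simps)
qed

lemma stk_const: "(\<forall>l\<le>i. \<not> nov d q p x l) \<Longrightarrow> stk d q p x i = p"
proof (induction i)
  case 0
  have a: "stk d q p x 0 = (if nov d q p x 0 then q (x 0) else p)" by (simp only: stk_eq pv_0)
  then show ?case using 0 by simp
next
  case (Suc i)
  have a: "stk d q p x (Suc i) = (if nov d q p x (Suc i) then q (x (Suc i)) else stk d q p x i)" by (simp only: stk_eq pv_Suc)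
  have "stk d q p x i = p" using Suc by simp
  then show ?case using a Suc.prems by simp
qed

lemma err_alt:
  assumes q: "\<And>z. \<bar>q z - z\<bar> \<le> e" and p: "\<bar>p - y\<bar> \<le> e"
  shows "\<bar>stk d q p x i - x i\<bar> \<le> e + W y x (Suc i) \<or> d - e \<le> W y x (Suc i)"
proof (cases "\<exists>l\<le>i. nov d q p x l")
  case True
  then obtain l where l: "l \<le> i" "nov d q p x l" by blast
  show ?thesis
  proof (cases "d - e \<le> 0")
    case True then show ?thesis using W_nonneg[of y x "Suc i"] by simp
  next
    case False
    obtain lst where ls: "lst \<le> Suc i" "real (card {j. j < Suc i \<and> nov d q p x j}) * (d - e) \<le> W y x lst"
      using count_inv[OF q p, of "Suc i" d x] by blast
    have "l \<in> {j. j < Suc i \<and> nov d q p x j}" using l by auto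
    then have "card {j. j < Suc i \<and> nov d q p x j} \<ge> 1"
    proof -
      have fin: "finite {j. j < Suc i \<and> nov d q p x j}" by simp
      have "0 < card {j. j < Suc i \<and> nov d q p x j}"
        using card_gt_0_iff fin \<open>l \<in> {j. j < Suc i \<and> nov d q p x j}\<close> by blast
      then show ?thesis by simp
    qed
    then have "1 * (d - e) \<le> real (card {j. j < Suc i \<and> nov d q p x j}) * (d - e)"
      using False by (intro mult_right_mono) auto
    then show ?thesis using ls W_mono[OF ls(1), of y x] by simp
  qed
next
  case False
  then have "stk d q p x i = p" by (intro stk_const) auto
  moreover have "\<bar>x i - y\<bar> \<le> W y x (Suc i)" using W_tri[of 0 "Suc i" y x] W_def by simp
  ultimately show ?thesis using p by (simp add: abs_le_iff)
qed

lemma stk_det: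
  assumes "\<And>l. l \<le> k \<Longrightarrow> nov d q p x l = nov d q p x' l"
    and "\<And>l. l \<le> k \<Longrightarrow> nov d q p x l \<Longrightarrow> q (x l) = q (x' l)"
  shows "stk d q p x k = stk d q p x' k"
  using assms
proof (induction k)
  case 0
  have a: "stk d q p x 0 = (if nov d q p x 0 then q (x 0) else p)" by (simp only: stk_eq pv_0)
  have b: "stk d q p x' 0 = (if nov d q p x' 0 then q (x' 0) else p)" by (simp only: stk_eq pv_0)
  have "nov d q p x 0 = nov d q p x' 0" "nov d q p x 0 \<Longrightarrow> q (x 0) = q (x' 0)" using 0 by auto
  then show ?case unfolding a b by (cases "nov d q p x 0") simp_all
next
  case (Suc k)
  have ih: "stk d q p x k = stk d q p x' k" using Suc by simp
  have a: "stk d q p x (Suc k) = (if nov d q p x (Suc k) then q (x (Suc k)) else stk d q p x k)" by (simp only: stk_eq pv_Suc)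
  have b: "stk d q p x' (Suc k) = (if nov d q p x' (Suc k) then q (x' (Suc k)) else stk d q p x' k)" by (simp only: stk_eq pv_Suc)
  have "nov d q p x (Suc k) = nov d q p x' (Suc k)" "nov d q p x (Suc k) \<Longrightarrow> q (x (Suc k)) = q (x' (Suc k))" using Suc.prems by auto
  then show ?case unfolding a b ih by (cases "nov d q p x (Suc k)") simp_all
qed



lemma charge:
  fixes g :: "nat \<Rightarrow> real"
  assumes A: "finite A" and B: "finite B" and sub: "\<And>i. i \<in> A \<Longrightarrow> Iv i \<subseteq> B"
    and cb: "\<And>l. l \<in> B \<Longrightarrow> card {i\<in>A. l \<in> Iv i} \<le> c" and g: "\<And>l. 0 \<le> g l"
  shows "(\<Sum>i\<in>A. \<Sum>l\<in>Iv i. g l) \<le> real c * (\<Sum>l\<in>B. g l)"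
proof -
  have "(\<Sum>i\<in>A. \<Sum>l\<in>Iv i. g l) = (\<Sum>i\<in>A. \<Sum>l\<in>B. if l \<in> Iv i then g l else 0)"
  proof (rule sum.cong[OF refl])
    fix i assume i: "i \<in> A"
    have "Iv i = B \<inter> Iv i" using sub[OF i] by auto
    then show "(\<Sum>l\<in>Iv i. g l) = (\<Sum>l\<in>B. if l \<in> Iv i then g l else 0)"
      using sum.inter_restrict[OF B, of g "Iv i"] by simp
  qed
  also have "\<dots> = (\<Sum>l\<in>B. \<Sum>i\<in>A. if l \<in> Iv i then g l else 0)" by (rule sum.swap)
  also have "\<dots> = (\<Sum>l\<in>B. real (card {i\<in>A. l \<in> Iv i}) * g l)"
  proof (rule sum.cong[OF refl])
    fix l
    have "(\<Sum>i\<in>A. if l \<in> Iv i then g l else 0) = (\<Sum>i\<in>{i\<in>A. l \<in> Iv i}. g l)"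
      using sum.inter_filter[OF A, of "\<lambda>_. g l" "\<lambda>i. l \<in> Iv i"] by simp
    then show "(\<Sum>i\<in>A. if l \<in> Iv i then g l else 0) = real (card {i\<in>A. l \<in> Iv i}) * g l" by simp
  qed
  also have "\<dots> \<le> (\<Sum>l\<in>B. real c * g l)"
    by (intro sum_mono mult_right_mono) (auto simp: cb g)
  finally show ?thesis by (simp add: sum_distrib_left)
qed

locale apx =
  fixes m n s :: nat and d1 D eta :: real
  assumes s1: "1 \<le> s" and sm: "s \<le> m" and eta: "0 < eta" "eta \<le> d1/2" and DD: "2*d1 \<le> D"
begin

definition q :: "real \<Rightarrow> real" where "q x = eta * of_int (round (x / eta))"

lemma q_err: "\<bar>q z - z\<bar> \<le> eta/2"
proof -
  have "\<bar>of_int (round (z/eta)) - z/eta\<bar> \<le> 1/2" by (rule of_int_round_abs_le)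
  then have "eta * \<bar>of_int (round (z/eta)) - z/eta\<bar> \<le> eta * (1/2)" using eta by (intro mult_left_mono) auto
  moreover have "eta * \<bar>of_int (round (z/eta)) - z/eta\<bar> = \<bar>eta * (of_int (round (z/eta)) - z/eta)\<bar>"
    using eta by (simp add: abs_mult)
  moreover have "eta * (of_int (round (z/eta)) - z/eta) = q z - z"
    using eta by (simp add: q_def field_simps)
  ultimately show ?thesis by simp
qed

lemma d1pos: "0 < d1" using eta by simp

lemma q_err1: "\<bar>q z - z\<bar> \<le> d1" using q_err[of z] eta by simp
lemma q_errD: "\<bar>q z - z\<bar> \<le> D" using q_err[of z] eta DD by simp

definition rho :: "nat \<Rightarrow> nat \<Rightarrow> nat" where
  "rho o' i = (if i < o' then o' else o' + (i - o') div s * s)"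
definition dd :: "nat \<Rightarrow> nat \<Rightarrow> nat" where
  "dd o' i = (if i < o' then o' - i else i - rho o' i)"
definition ps :: "nat \<Rightarrow> nat \<Rightarrow> nat \<Rightarrow> nat" where
  "ps o' i l = (if i < o' then o' - l else rho o' i + l)"

lemma rho_ge: "o' \<le> i \<Longrightarrow> o' \<le> rho o' i \<and> rho o' i \<le> i \<and> i - rho o' i = (i - o') mod s"
proof -
  assume a: "o' \<le> i"
  have e: "(i - o') div s * s + (i - o') mod s = i - o'" by (rule div_mult_mod_eq)
  have r: "rho o' i = o' + (i - o') div s * s" using a unfolding rho_def by simp
  show ?thesis unfolding r using a e by arith
qed

lemma rho_lt: "o' \<le> i \<Longrightarrow> i < rho o' i + s"
proof -
  assume a: "o' \<le> i"
  have "(i - o') mod s < s" using s1 by simp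
  then show ?thesis using rho_ge[OF a] by linarith
qed

lemma rho_eqI:
  assumes "o' + a * s \<le> l" "l < o' + a * s + s"
  shows "rho o' l = o' + a * s"
proof -
  have "(l - o') div s = a" using assms by (intro div_nat_eqI) (auto simp: algebra_simps)
  then show ?thesis using assms unfolding rho_def by auto
qed

lemma rho_same:
  assumes "o' \<le> i" "rho o' i \<le> l" "l \<le> i"
  shows "rho o' l = rho o' i"
proof -
  have r: "rho o' i = o' + (i - o') div s * s" using assms unfolding rho_def by auto
  have "rho o' l = o' + (i - o') div s * s"
    using rho_lt[OF assms(1)] assms r by (intro rho_eqI) auto
  then show ?thesis using r by simp
qed

lemma rho_idem: "o' \<le> i \<Longrightarrow> rho o' (rho o' i) = rho o' i"
  using rho_same[of o' i "rho o' i"] rho_ge[of o' i] by auto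

lemma dd_rho: "o' \<le> i \<Longrightarrow> dd o' (rho o' i) = 0"
  using rho_idem[of o' i] rho_ge[of o' i] unfolding dd_def by auto

lemma dd_zero_iff:
  assumes "o' < s"
  shows "dd o' r = 0 \<longleftrightarrow> r mod s = o'"
proof (cases "r < o'")
  case True
  then have "r mod s = r" using assms by simp
  then show ?thesis using True unfolding dd_def by auto
next
  case False
  then have "dd o' r = (r - o') mod s" using rho_ge[of o' r] unfolding dd_def by auto
  moreover have "((r - o') mod s = 0) \<longleftrightarrow> r mod s = o' mod s"
    using False mod_eq_dvd_iff_nat[of o' r s] by (simp add: dvd_eq_mod_eq_0)
  ultimately show ?thesis using assms by simp
qed

lemma seg:
  assumes o: "o' < s" and i: "i < m" and l: "l < dd o' i"
  shows "ps o' i (Suc l) < m \<and> dd o' (ps o' i (Suc l)) = Suc l \<and> rho o' (ps o' i (Suc l)) = rho o' i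
     \<and> (ps o' i (Suc l) < o' \<longleftrightarrow> i < o')"
proof (cases "i < o'")
  case True
  then have "dd o' i = o' - i" "rho o' i = o'" unfolding dd_def rho_def by auto
  then show ?thesis using True l o sm unfolding ps_def dd_def rho_def by auto
next
  case False
  let ?r = "rho o' i"
  have g: "o' \<le> ?r" "?r \<le> i" using rho_ge[of o' i] False by auto
  have d: "dd o' i = i - ?r" using False unfolding dd_def by auto
  have p: "ps o' i (Suc l) = ?r + Suc l" using False unfolding ps_def by auto
  have rr: "rho o' (?r + Suc l) = ?r" using rho_same[of o' i "?r + Suc l"] False l d g by auto
  show ?thesis using p rr l d g i unfolding dd_def by auto
qed

lemma ps_last: "0 < dd o' i \<Longrightarrow> ps o' i (dd o' i) = i"
  unfolding ps_def dd_def using rho_ge[of o' i] by auto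

end


context apx begin

definition Rw :: "(nat \<Rightarrow> nat \<Rightarrow> real) \<Rightarrow> nat \<Rightarrow> nat \<Rightarrow> real" where
  "Rw th r j = stk d1 q (q (th r 0)) (\<lambda>j. th r j) j"
definition xc :: "(nat \<Rightarrow> nat \<Rightarrow> real) \<Rightarrow> nat \<Rightarrow> nat \<Rightarrow> nat \<Rightarrow> nat \<Rightarrow> real" where
  "xc th o' i j = (\<lambda>l. th (ps o' i (Suc l)) j)"
definition Cc :: "(nat \<Rightarrow> nat \<Rightarrow> real) \<Rightarrow> nat \<Rightarrow> nat \<Rightarrow> nat \<Rightarrow> real" where
  "Cc th o' i j = stk D q (Rw th (rho o' i) j) (xc th o' i j) (dd o' i - 1)"
definition App :: "(nat \<Rightarrow> nat \<Rightarrow> real) \<Rightarrow> nat \<Rightarrow> nat \<Rightarrow> nat \<Rightarrow> real" where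
  "App th o' = (\<lambda>i j. if i < m \<and> j < n then (if dd o' i = 0 then Rw th i j else Cc th o' i j) else 0)"
definition rnov :: "(nat \<Rightarrow> nat \<Rightarrow> real) \<Rightarrow> nat \<Rightarrow> nat \<Rightarrow> bool" where
  "rnov th i j \<longleftrightarrow> j = 0 \<or> nov d1 q (q (th i 0)) (\<lambda>j. th i j) j"
definition cnov :: "(nat \<Rightarrow> nat \<Rightarrow> real) \<Rightarrow> nat \<Rightarrow> nat \<Rightarrow> nat \<Rightarrow> bool" where
  "cnov th o' i j \<longleftrightarrow> nov D q (Rw th (rho o' i) j) (xc th o' i j) (dd o' i - 1)"
definition Nv :: "(nat \<Rightarrow> nat \<Rightarrow> real) \<Rightarrow> nat \<Rightarrow> (nat \<times> nat) set" where
  "Nv th o' = {(i,j). i < m \<and> j < n \<and> (if dd o' i = 0 then rnov th i j else cnov th o' i j)}"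
definition Xs :: "(nat \<Rightarrow> nat \<Rightarrow> real) \<Rightarrow> nat \<Rightarrow> (nat \<times> nat \<times> int) set" where
  "Xs th o' = (\<lambda>(i,j). (i, j, round (th i j / eta))) ` Nv th o'"

lemma Nv_Xs: "Nv th o' = (\<lambda>(i,j,z). (i,j)) ` Xs th o'"
  unfolding Xs_def image_image by (auto simp: case_prod_beta image_iff)

lemma Xs_q:
  assumes "Xs th o' = Xs th' o'" "(i,j) \<in> Nv th o'"
  shows "q (th i j) = q (th' i j)"
proof -
  have "(i, j, round (th i j / eta)) \<in> Xs th' o'" using assms unfolding Xs_def by force
  then have "round (th i j / eta) = round (th' i j / eta)" unfolding Xs_def by auto
  then show ?thesis unfolding q_def by simp
qed

lemma nov0_false: "\<not> nov d1 q (q (x 0)) x 0"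
  using q_err1[of "x 0"] unfolding nov_def pv_def by simp

lemma rho_lt_m: "o' < s \<Longrightarrow> i < m \<Longrightarrow> rho o' i < m"
  using sm rho_ge[of o' i] unfolding rho_def by (auto split: if_splits)

lemma dd_rho_all: "dd o' (rho o' i) = 0"
proof (cases "i < o'")
  case True then show ?thesis unfolding rho_def dd_def by simp
next
  case False then show ?thesis using dd_rho by simp
qed

lemma Rw_det:
  assumes X: "Xs th o' = Xs th' o'" and r: "r < m" "dd o' r = 0" and j: "j < n"
  shows "Rw th r j = Rw th' r j"
proof -
  have N: "Nv th o' = Nv th' o'" using X Nv_Xs by metis
  have "(r,0) \<in> Nv th o'" using r j unfolding Nv_def rnov_def by auto
  then have p: "q (th r 0) = q (th' r 0)" using Xs_q[OF X] by blast
  have "stk d1 q (q (th r 0)) (\<lambda>j. th r j) j = stk d1 q (q (th r 0)) (\<lambda>j. th' r j) j"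
  proof (rule stk_det)
    fix l assume l: "l \<le> j"
    show "nov d1 q (q (th r 0)) (\<lambda>j. th r j) l = nov d1 q (q (th r 0)) (\<lambda>j. th' r j) l"
    proof (cases "l = 0")
      case True
      then show ?thesis using nov0_false[of "\<lambda>j. th r j"] nov0_false[of "\<lambda>j. th' r j"] p by simp
    next
      case False
      have "(r,l) \<in> Nv th o' \<longleftrightarrow> (r,l) \<in> Nv th' o'" using N by simp
      then show ?thesis using False r j l p unfolding Nv_def rnov_def by auto
    qed
    assume "nov d1 q (q (th r 0)) (\<lambda>j. th r j) l"
    then have "(r,l) \<in> Nv th o'" using r j l unfolding Nv_def rnov_def by auto
    then show "q (th r l) = q (th' r l)" using Xs_q[OF X] by blast
  qed
  then show ?thesis unfolding Rw_def using p by simp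
qed

lemma xc_seg:
  assumes o: "o' < s" and i: "i < m" and l: "l < dd o' i"
  shows "xc th o' (ps o' i (Suc l)) j = xc th o' i j"
proof -
  have sg: "rho o' (ps o' i (Suc l)) = rho o' i" "(ps o' i (Suc l) < o' \<longleftrightarrow> i < o')"
    using seg[OF o i l] by auto
  then have "ps o' (ps o' i (Suc l)) = ps o' i" unfolding ps_def by (auto simp: fun_eq_iff)
  then show ?thesis unfolding xc_def by simp
qed

lemma Cc_det:
  assumes o: "o' < s" and X: "Xs th o' = Xs th' o'" and i: "i < m" "0 < dd o' i" and j: "j < n"
  shows "Cc th o' i j = Cc th' o' i j"
proof -
  have N: "Nv th o' = Nv th' o'" using X Nv_Xs by metis
  let ?r = "rho o' i"
  have p: "Rw th ?r j = Rw th' ?r j"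
    using Rw_det[OF X rho_lt_m[OF o i(1)] dd_rho_all j] .
  have "stk D q (Rw th ?r j) (xc th o' i j) (dd o' i - 1) = stk D q (Rw th ?r j) (xc th' o' i j) (dd o' i - 1)"
  proof (rule stk_det)
    fix l assume l0: "l \<le> dd o' i - 1"
    then have l: "l < dd o' i" using i by simp
    let ?i = "ps o' i (Suc l)"
    have sg: "?i < m" "dd o' ?i = Suc l" "rho o' ?i = rho o' i" using seg[OF o i(1) l] by auto
    have xa: "xc th o' ?i j = xc th o' i j" "xc th' o' ?i j = xc th' o' i j" using xc_seg[OF o i(1) l] by auto
    have e1: "(?i, j) \<in> Nv th o' \<longleftrightarrow> nov D q (Rw th ?r j) (xc th o' i j) l"
      using sg xa j unfolding Nv_def cnov_def by auto
    have e2: "(?i, j) \<in> Nv th' o' \<longleftrightarrow> nov D q (Rw th ?r j) (xc th' o' i j) l"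
      using sg xa j p unfolding Nv_def cnov_def by auto
    show "nov D q (Rw th ?r j) (xc th o' i j) l = nov D q (Rw th ?r j) (xc th' o' i j) l"
      using e1 e2 N by simp
    assume "nov D q (Rw th ?r j) (xc th o' i j) l"
    then have "(?i, j) \<in> Nv th o'" using e1 by simp
    then have "q (th ?i j) = q (th' ?i j)" using Xs_q[OF X] by blast
    then show "q (xc th o' i j l) = q (xc th' o' i j l)" unfolding xc_def by simp
  qed
  then show ?thesis unfolding Cc_def using p by simp
qed

lemma App_det:
  assumes o: "o' < s" and X: "Xs th o' = Xs th' o'"
  shows "App th o' = App th' o'"
  unfolding App_def using Rw_det[OF X] Cc_det[OF o X] by (auto simp: fun_eq_iff)

lemma App_mats: "App th o' \<in> mats m n"
  unfolding mats_def App_def by auto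

end


lemma nl_err:
  fixes e d1 D c W :: real
  assumes "0 \<le> e" "e \<le> D" "D \<le> max c (2*d1)" "e \<le> d1 + W \<or> D - d1 \<le> W" "0 \<le> W" "0 < d1" "0 < c"
  shows "e^2 \<le> 2*c*W + 4*d1^2"
proof (cases "D \<le> 2*d1")
  case True
  then have "e \<le> 2*d1" using assms by simp
  then have "e^2 \<le> (2*d1)^2" using assms by (intro power_mono) auto
  moreover have "0 \<le> 2*c*W" using assms by simp
  moreover have "(2*d1)^2 = 4*d1^2" by (simp add: power_mult_distrib)
  ultimately show ?thesis by linarith
next
  case False
  then have Dc: "D \<le> c" using assms by (simp add: max_def split: if_splits)
  show ?thesis
  proof (cases "e \<le> 2*d1")
    case True
    then have "e^2 \<le> (2*d1)^2" using assms by (intro power_mono) auto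
    moreover have "0 \<le> 2*c*W" using assms by simp
    moreover have "(2*d1)^2 = 4*d1^2" by (simp add: power_mult_distrib)
    ultimately show ?thesis by linarith
  next
    case False2: False
    have "e \<le> 2*W" using assms False2 False by auto
    then have "e*e \<le> c * (2*W)" using assms Dc by (intro mult_mono) auto
    moreover have "0 \<le> d1*d1" by simp
    ultimately show ?thesis unfolding power2_eq_square by linarith
  qed
qed

context apx begin

definition g :: "(nat \<Rightarrow> nat \<Rightarrow> real) \<Rightarrow> nat \<Rightarrow> nat \<Rightarrow> real" where
  "g th j l = \<bar>th (l + 1) j - th l j\<bar>"

lemma W_top:
  "N \<le> o' \<Longrightarrow> W (th o' j) (\<lambda>l. th (o' - Suc l) j) N = (\<Sum>l\<in>{o' - N..<o'}. g th j l)"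
proof (induction N)
  case 0 then show ?case by (simp add: W_def)
next
  case (Suc N)
  have c: "case_nat (th o' j) (\<lambda>l. th (o' - Suc l) j) N = th (o' - N) j" by (cases N) auto
  have e: "o' - N = Suc (o' - Suc N)" using Suc.prems by simp
  have s: "{o' - Suc N..<o'} = insert (o' - Suc N) {o' - N..<o'}" using Suc.prems by auto
  show ?case using Suc unfolding W_Suc c s
    by (simp add: e g_def abs_minus_commute)
qed

lemma W_bot:
  "W (th r j) (\<lambda>l. th (r + Suc l) j) N = (\<Sum>l\<in>{r..<r+N}. g th j l)"
proof (induction N)
  case 0 then show ?case by (simp add: W_def)
next
  case (Suc N)
  have c: "case_nat (th r j) (\<lambda>l. th (r + Suc l) j) N = th (r + N) j" by (cases N) auto
  show ?case using Suc unfolding W_Suc c by (simp add: g_def)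
qed

definition Iv :: "nat \<Rightarrow> nat \<Rightarrow> nat set" where
  "Iv o' i = (if i < o' then {i..<o'} else {rho o' i..<i})"

lemma W_cell:
  assumes "0 < dd o' i"
  shows "W (th (rho o' i) j) (xc th o' i j) (dd o' i) = (\<Sum>l\<in>Iv o' i. g th j l)"
proof (cases "i < o'")
  case True
  have "xc th o' i j = (\<lambda>l. th (o' - Suc l) j)" unfolding xc_def ps_def using True by simp
  moreover have "rho o' i = o'" "dd o' i = o' - i" using True unfolding rho_def dd_def by auto
  moreover have "o' - (o' - i) = i" using True by simp
  ultimately show ?thesis using W_top[of "o' - i" o' th j] True unfolding Iv_def by simp
next
  case False
  have "xc th o' i j = (\<lambda>l. th (rho o' i + Suc l) j)" unfolding xc_def ps_def using False by simp
  moreover have "dd o' i = i - rho o' i" "rho o' i \<le> i" using False rho_ge[of o' i] unfolding dd_def by auto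
  ultimately show ?thesis using W_bot[of th "rho o' i" j "i - rho o' i"] False unfolding Iv_def by simp
qed

lemma cell_err:
  assumes o: "o' < s" and i: "i < m" and j: "j < n" and c: "0 < c" and Dc: "D \<le> max c (2*d1)"
  shows "(th i j - App th o' i j)^2 \<le> 4*d1^2 + 2*c*(if dd o' i = 0 then 0 else (\<Sum>l\<in>Iv o' i. g th j l))"
proof (cases "dd o' i = 0")
  case True
  have "\<bar>Rw th i j - th i j\<bar> \<le> d1" unfolding Rw_def by (rule stk_err) (rule q_err1)
  then have "\<bar>th i j - App th o' i j\<bar> \<le> d1" using True i j unfolding App_def by simp
  then have "\<bar>th i j - App th o' i j\<bar>^2 \<le> d1^2" by (intro power_mono) auto
  moreover have "0 \<le> d1^2" by simp
  ultimately have "(th i j - App th o' i j)^2 \<le> 4*d1^2" unfolding power2_abs by linarith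
  then show ?thesis using True by simp
next
  case False
  let ?y = "th (rho o' i) j" and ?p = "Rw th (rho o' i) j" and ?x = "xc th o' i j"
  have A: "App th o' i j = stk D q ?p ?x (dd o' i - 1)" using False i j unfolding App_def Cc_def by simp
  have xl: "?x (dd o' i - 1) = th i j" using ps_last[of o' i] False unfolding xc_def by simp
  have e1: "\<bar>stk D q ?p ?x (dd o' i - 1) - th i j\<bar> \<le> D" using stk_err[OF q_errD] xl by metis
  have py: "\<bar>?p - ?y\<bar> \<le> d1" unfolding Rw_def by (rule stk_err) (rule q_err1)
  have e2: "\<bar>stk D q ?p ?x (dd o' i - 1) - th i j\<bar> \<le> d1 + W ?y ?x (dd o' i) \<or> D - d1 \<le> W ?y ?x (dd o' i)"
    using err_alt[OF q_err1 py, of D ?x "dd o' i - 1"] xl False by simp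
  have Wc: "W ?y ?x (dd o' i) = (\<Sum>l\<in>Iv o' i. g th j l)" using W_cell False by simp
  have "\<bar>stk D q ?p ?x (dd o' i - 1) - th i j\<bar>^2 \<le> 2*c*W ?y ?x (dd o' i) + 4*d1^2"
    by (rule nl_err[OF _ e1 Dc e2 W_nonneg d1pos c]) simp
  then show ?thesis using False A Wc by (simp add: abs_minus_commute power2_abs)
qed

end


context apx begin

lemma TVc_eq: "TV_c m n th = (\<Sum>j<n. \<Sum>l<m-1. g th j l)"
  by (simp add: TV_c_def TV_r_def mtrans_def g_def)

lemma Iv_sub:
  assumes o: "o' < s" and i: "i < m"
  shows "Iv o' i \<subseteq> {..<m-1}"
proof (cases "i < o'")
  case True then show ?thesis using o sm unfolding Iv_def by auto
next
  case False then show ?thesis using i unfolding Iv_def by auto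
qed

lemma Iv_card:
  assumes o: "o' < s"
  shows "card {i\<in>{i. i < m \<and> 0 < dd o' i}. l \<in> Iv o' i} \<le> s - 1"
proof (cases "l < o'")
  case True
  have "{i\<in>{i. i < m \<and> 0 < dd o' i}. l \<in> Iv o' i} \<subseteq> {..l}"
  proof
    fix i assume "i \<in> {i\<in>{i. i < m \<and> 0 < dd o' i}. l \<in> Iv o' i}"
    then have "l \<in> Iv o' i" by simp
    then show "i \<in> {..l}"
      using True rho_ge[of o' i] unfolding Iv_def by (auto split: if_splits)
  qed
  then have "card {i\<in>{i. i < m \<and> 0 < dd o' i}. l \<in> Iv o' i} \<le> card {..l}" by (intro card_mono) auto
  then show ?thesis using True o by simp
next
  case False
  have "{i\<in>{i. i < m \<and> 0 < dd o' i}. l \<in> Iv o' i} \<subseteq> {Suc l..<rho o' l + s}"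
  proof
    fix i assume "i \<in> {i\<in>{i. i < m \<and> 0 < dd o' i}. l \<in> Iv o' i}"
    then have li: "l \<in> Iv o' i" by simp
    then have io: "o' \<le> i" "rho o' i \<le> l" "l < i" using False unfolding Iv_def by (auto split: if_splits)
    then have "rho o' l = rho o' i" using rho_same[of o' i l] by simp
    then show "i \<in> {Suc l..<rho o' l + s}" using io rho_lt[of o' i] by simp
  qed
  then have "card {i\<in>{i. i < m \<and> 0 < dd o' i}. l \<in> Iv o' i} \<le> card {Suc l..<rho o' l + s}" by (intro card_mono) auto
  moreover have "rho o' l \<le> l" using rho_ge[of o' l] False by simp
  ultimately show ?thesis by simp
qed

lemma total_err:
  fixes c :: real
  assumes o: "o' < s" and c: "0 < c" and Dc: "D \<le> max c (2*d1)"
  shows "(\<Sum>i<m. \<Sum>j<n. (th i j - App th o' i j)^2) \<le> 4*m*n*d1^2 + 2*c*real (s-1)*TV_c m n th"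
proof -
  let ?F = "\<lambda>i j. if dd o' i = 0 then 0 else (\<Sum>l\<in>Iv o' i. g th j l)"
  let ?A = "{i. i < m \<and> 0 < dd o' i}"
  have "(\<Sum>i<m. \<Sum>j<n. (th i j - App th o' i j)^2) \<le> (\<Sum>i<m. \<Sum>j<n. 4*d1^2 + 2*c*?F i j)"
    using cell_err[OF o _ _ c Dc] by (intro sum_mono) auto
  also have "\<dots> = 4*m*n*d1^2 + 2*c*(\<Sum>i<m. \<Sum>j<n. ?F i j)"
    by (simp add: sum.distrib sum_distrib_left)
  also have "(\<Sum>i<m. \<Sum>j<n. ?F i j) = (\<Sum>j<n. \<Sum>i<m. ?F i j)" by (rule sum.swap)
  also have "\<dots> = (\<Sum>j<n. \<Sum>i\<in>?A. \<Sum>l\<in>Iv o' i. g th j l)"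
  proof (rule sum.cong[OF refl])
    fix j
    have "(\<Sum>i\<in>?A. \<Sum>l\<in>Iv o' i. g th j l) = (\<Sum>i\<in>{i\<in>{..<m}. 0 < dd o' i}. \<Sum>l\<in>Iv o' i. g th j l)"
      by (rule sum.cong) auto
    also have "\<dots> = (\<Sum>i<m. ?F i j)" by (subst sum.inter_filter) (auto intro: sum.cong)
    finally show "(\<Sum>i<m. ?F i j) = (\<Sum>i\<in>?A. \<Sum>l\<in>Iv o' i. g th j l)" by simp
  qed
  also have "\<dots> \<le> (\<Sum>j<n. real (s-1) * (\<Sum>l<m-1. g th j l))"
  proof (rule sum_mono)
    fix j
    show "(\<Sum>i\<in>?A. \<Sum>l\<in>Iv o' i. g th j l) \<le> real (s-1) * (\<Sum>l<m-1. g th j l)"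
      by (rule charge) (use Iv_sub[OF o] Iv_card[OF o] in \<open>auto simp: g_def\<close>)
  qed
  also have "\<dots> = real (s-1) * TV_c m n th" by (simp add: TVc_eq sum_distrib_left)
  finally show ?thesis using c s1 by (simp add: mult_left_mono of_nat_diff)
qed

end


context apx begin

definition Ls :: "nat \<Rightarrow> nat set" where "Ls o' = {r. r < m \<and> dd o' r = 0}"
definition TVrow :: "(nat \<Rightarrow> nat \<Rightarrow> real) \<Rightarrow> nat \<Rightarrow> real" where
  "TVrow th r = (\<Sum>j<n-1. \<bar>th r (j+1) - th r j\<bar>)"

lemma TVr_eq: "TV_r m n th = (\<Sum>r<m. TVrow th r)"
  by (simp add: TV_r_def TVrow_def)

lemma row_count:
  "real (card {j. j < n \<and> rnov th r j}) \<le> 1 + TVrow th r / (d1 - eta/2)"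
proof -
  let ?S = "{j. j < n \<and> nov d1 q (q (th r 0)) (\<lambda>j. th r j) j}"
  have "{j. j < n \<and> rnov th r j} \<subseteq> insert 0 ?S" unfolding rnov_def by auto
  then have "card {j. j < n \<and> rnov th r j} \<le> card (insert 0 ?S)" by (intro card_mono) auto
  also have "\<dots> \<le> Suc (card ?S)" by (rule card_insert_le_m1[of _ _]) auto
  finally have c1: "real (card {j. j < n \<and> rnov th r j}) \<le> 1 + real (card ?S)" by simp
  have pq: "\<bar>q (th r 0) - th r 0\<bar> \<le> eta/2" by (rule q_err)
  have "real (card ?S) \<le> W (th r 0) (\<lambda>j. th r j) n / (d1 - eta/2)"
    by (rule count_bound[OF q_err pq]) (use eta in simp)
  also have "W (th r 0) (\<lambda>j. th r j) n = TVrow th r"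
    using W_first[of "\<lambda>j. th r j" n] by (simp add: TVrow_def)
  finally show ?thesis using c1 by simp
qed

lemma dd_zero_ge: "dd o' r = 0 \<Longrightarrow> o' \<le> r \<and> rho o' r = r"
  unfolding dd_def using rho_ge[of o' r] by (auto split: if_splits)

lemma col_count:
  assumes o: "o' < s"
  shows "real (card {i. i < m \<and> 0 < dd o' i \<and> cnov th o' i j}) \<le> (\<Sum>l<m-1. g th j l) / (D - d1)"
proof -
  define len where "len r = min (m - Suc r) (s - 1)" for r
  define Top where "Top = (\<lambda>l. o' - Suc l) ` {l. l < o' \<and> nov D q (Rw th o' j) (\<lambda>l. th (o' - Suc l) j) l}"
  define Bk where "Bk r = (\<lambda>l. r + Suc l) ` {l. l < len r \<and> nov D q (Rw th r j) (\<lambda>l. th (r + Suc l) j) l}" for r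
  have Dd: "0 < D - d1" using DD d1pos by simp
  have sub: "{i. i < m \<and> 0 < dd o' i \<and> cnov th o' i j} \<subseteq> Top \<union> (\<Union>r\<in>Ls o'. Bk r)"
  proof
    fix i assume i: "i \<in> {i. i < m \<and> 0 < dd o' i \<and> cnov th o' i j}"
    show "i \<in> Top \<union> (\<Union>r\<in>Ls o'. Bk r)"
    proof (cases "i < o'")
      case True
      have x1: "xc th o' i j = (\<lambda>l. th (o' - Suc l) j)" using True unfolding xc_def ps_def by simp
      have x2: "rho o' i = o'" using True unfolding rho_def by simp
      have x3: "dd o' i = o' - i" using True unfolding dd_def by simp
      have c: "cnov th o' i j" using i by simp
      have e1: "i = o' - Suc (o' - Suc i)" using True by simp
      have e2: "o' - Suc i < o'" using True by simp
      have e3: "dd o' i - 1 = o' - Suc i" using x3 by simp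
      have "nov D q (Rw th o' j) (\<lambda>l. th (o' - Suc l) j) (o' - Suc i)"
        using c unfolding cnov_def x1 x2 e3 .
      then have "i \<in> Top" unfolding Top_def using e1 e2 by blast
      then show ?thesis by simp
    next
      case False
      let ?r = "rho o' i"
      have g1: "o' \<le> ?r" "?r \<le> i" using rho_ge[of o' i] False by auto
      have g2: "i < ?r + s" using rho_lt[of o' i] False by simp
      have x1: "xc th o' i j = (\<lambda>l. th (?r + Suc l) j)" using False unfolding xc_def ps_def by simp
      have x3: "dd o' i = i - ?r" using False unfolding dd_def by simp
      have im: "i < m" and dp: "0 < dd o' i" and c: "cnov th o' i j" using i by auto
      have rL: "?r \<in> Ls o'" unfolding Ls_def using g1 im dd_rho[of o' i] False by simp
      have ir: "?r < i" using dp x3 by simp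
      have e1: "i = ?r + Suc (i - Suc ?r)" using ir by simp
      have a1: "i - Suc ?r < m - Suc ?r" using im ir by (intro diff_less_mono) auto
      have "i - Suc ?r < ?r + s - Suc ?r" using g2 ir by (intro diff_less_mono) auto
      then have a2: "i - Suc ?r < s - 1" by simp
      have e2: "i - Suc ?r < len ?r" unfolding len_def using a1 a2 by simp
      have e3: "dd o' i - 1 = i - Suc ?r" using x3 by simp
      have "nov D q (Rw th ?r j) (\<lambda>l. th (?r + Suc l) j) (i - Suc ?r)"
        using c unfolding cnov_def x1 e3 .
      then have "i \<in> Bk ?r" unfolding Bk_def using e1 e2 by blast
      then show ?thesis using rL by blast
    qed
  qed
  have finL: "finite (Ls o')" unfolding Ls_def by simp
  have py: "\<And>r. \<bar>Rw th r j - th r j\<bar> \<le> d1" unfolding Rw_def by (rule stk_err) (rule q_err1)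
  have cT: "real (card Top) \<le> (\<Sum>l\<in>{0..<o'}. g th j l) / (D - d1)"
  proof -
    have a: "card Top \<le> card {l. l < o' \<and> nov D q (Rw th o' j) (\<lambda>l. th (o' - Suc l) j) l}"
      unfolding Top_def by (rule card_image_le) simp
    have b: "real (card {l. l < o' \<and> nov D q (Rw th o' j) (\<lambda>l. th (o' - Suc l) j) l})
        \<le> W (th o' j) (\<lambda>l. th (o' - Suc l) j) o' / (D - d1)"
      by (rule count_bound[OF q_err1 py]) (use DD d1pos in simp)
    have c: "W (th o' j) (\<lambda>l. th (o' - Suc l) j) o' = (\<Sum>l\<in>{0..<o'}. g th j l)"
      using W_top[of o' o' th j] by simp
    from a have a': "real (card Top) \<le> real (card {l. l < o' \<and> nov D q (Rw th o' j) (\<lambda>l. th (o' - Suc l) j) l})"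
      by (simp only: of_nat_le_iff)
    show ?thesis using a' b unfolding c by linarith
  qed
  have cB: "real (card (Bk r)) \<le> (\<Sum>l\<in>{r..<r + len r}. g th j l) / (D - d1)" for r
  proof -
    have a: "card (Bk r) \<le> card {l. l < len r \<and> nov D q (Rw th r j) (\<lambda>l. th (r + Suc l) j) l}"
      unfolding Bk_def by (rule card_image_le) simp
    have b: "real (card {l. l < len r \<and> nov D q (Rw th r j) (\<lambda>l. th (r + Suc l) j) l})
        \<le> W (th r j) (\<lambda>l. th (r + Suc l) j) (len r) / (D - d1)"
      by (rule count_bound[OF q_err1 py]) (use DD d1pos in simp)
    have c: "W (th r j) (\<lambda>l. th (r + Suc l) j) (len r) = (\<Sum>l\<in>{r..<r + len r}. g th j l)"
      by (rule W_bot)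
    from a have a': "real (card (Bk r)) \<le> real (card {l. l < len r \<and> nov D q (Rw th r j) (\<lambda>l. th (r + Suc l) j) l})"
      by (simp only: of_nat_le_iff)
    show ?thesis using a' b unfolding c by linarith
  qed
  have finT: "finite Top" unfolding Top_def by simp
  have finB: "\<And>r. finite (Bk r)" unfolding Bk_def by simp
  have "card {i. i < m \<and> 0 < dd o' i \<and> cnov th o' i j} \<le> card (Top \<union> (\<Union>r\<in>Ls o'. Bk r))"
    by (rule card_mono[OF _ sub]) (use finT finB finL in auto)
  also have "\<dots> \<le> card Top + card (\<Union>r\<in>Ls o'. Bk r)" by (rule card_Un_le)
  also have "card (\<Union>r\<in>Ls o'. Bk r) \<le> (\<Sum>r\<in>Ls o'. card (Bk r))" by (rule card_UN_le[OF finL])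
  finally have "card {i. i < m \<and> 0 < dd o' i \<and> cnov th o' i j} \<le> card Top + (\<Sum>r\<in>Ls o'. card (Bk r))"
    by simp
  then have "real (card {i. i < m \<and> 0 < dd o' i \<and> cnov th o' i j}) \<le> real (card Top + (\<Sum>r\<in>Ls o'. card (Bk r)))"
    by (simp only: of_nat_le_iff)
  also have "\<dots> = real (card Top) + (\<Sum>r\<in>Ls o'. real (card (Bk r)))" by simp
  also have "\<dots> \<le> (\<Sum>l\<in>{0..<o'}. g th j l) / (D - d1) + (\<Sum>r\<in>Ls o'. (\<Sum>l\<in>{r..<r + len r}. g th j l) / (D - d1))"
    using cT cB by (intro add_mono sum_mono) auto
  also have "\<dots> = ((\<Sum>l\<in>{0..<o'}. g th j l) + (\<Sum>r\<in>Ls o'. \<Sum>l\<in>{r..<r + len r}. g th j l)) / (D - d1)"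
    by (simp add: sum_divide_distrib add_divide_distrib)
  also have "(\<Sum>l\<in>{0..<o'}. g th j l) + (\<Sum>r\<in>Ls o'. \<Sum>l\<in>{r..<r + len r}. g th j l) \<le> (\<Sum>l<m-1. g th j l)"
  proof -
    define Iw where "Iw r = (if r = m then {0..<o'} else {r..<r + len r})" for r
    have mL: "m \<notin> Ls o'" unfolding Ls_def by simp
    have "(\<Sum>l\<in>{0..<o'}. g th j l) + (\<Sum>r\<in>Ls o'. \<Sum>l\<in>{r..<r + len r}. g th j l)
        = (\<Sum>r\<in>insert m (Ls o'). \<Sum>l\<in>Iw r. g th j l)"
      using mL finL unfolding Iw_def by (simp add: Ls_def)
    also have "\<dots> \<le> real 1 * (\<Sum>l<m-1. g th j l)"
    proof (rule charge)
      show "finite (insert m (Ls o'))" using finL by simp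
      show "finite {..<m-1}" by simp
      show "Iw r \<subseteq> {..<m-1}" if "r \<in> insert m (Ls o')" for r
        using that o sm unfolding Iw_def Ls_def len_def by auto
      show "0 \<le> g th j l" for l unfolding g_def by simp
      show "card {r\<in>insert m (Ls o'). l \<in> Iw r} \<le> 1" if "l \<in> {..<m-1}" for l
      proof -
        have "{r\<in>insert m (Ls o'). l \<in> Iw r} \<subseteq> {if l < o' then m else rho o' l}"
        proof
          fix r assume r: "r \<in> {r\<in>insert m (Ls o'). l \<in> Iw r}"
          show "r \<in> {if l < o' then m else rho o' l}"
          proof (cases "r = m")
            case True then show ?thesis using r unfolding Iw_def by auto
          next
            case False
            then have rL: "r \<in> Ls o'" "l \<in> {r..<r + len r}" using r unfolding Iw_def by auto
            have rr: "o' \<le> r" "rho o' r = r" using rL dd_zero_ge unfolding Ls_def by auto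
            have "r = o' + (r - o') div s * s" using rr(1) rr(2) unfolding rho_def by (auto split: if_splits)
            moreover have "l < r + s" using rL(2) unfolding len_def by auto
            ultimately have "rho o' l = r" using rL(2) rho_eqI[of o' "(r - o') div s" l] by auto
            then show ?thesis using rL rr by auto
          qed
        qed
        then have "card {r\<in>insert m (Ls o'). l \<in> Iw r} \<le> card {if l < o' then m else rho o' l}"
          by (intro card_mono) auto
        then show ?thesis by simp
      qed
    qed
    finally show ?thesis by simp
  qed
  finally show ?thesis using Dd by (simp add: divide_right_mono)
qed

end


lemma subsets_card:
  assumes T: "finite T"
  shows "card {X. X \<subseteq> T \<and> card X \<le> P} \<le> card T ^ P + 1"
proof -
  let ?F = "(\<lambda>f. f ` {..<P}) ` (PiE {..<P} (\<lambda>_. T))"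
  have sub: "{X. X \<subseteq> T \<and> card X \<le> P} \<subseteq> insert {} ?F"
  proof
    fix X assume X: "X \<in> {X. X \<subseteq> T \<and> card X \<le> P}"
    show "X \<in> insert {} ?F"
    proof (cases "X = {}")
      case True then show ?thesis by simp
    next
      case False
      have fX: "finite X" using X T finite_subset by auto
      obtain xs where xs: "set xs = X" "distinct xs" using finite_distinct_list[OF fX] by blast
      have len: "length xs = card X" using xs distinct_card by metis
      have l1: "1 \<le> length xs" using False xs by (cases xs) auto
      have lP: "length xs \<le> P" using len X by simp
      define f where "f p = xs ! (min p (length xs - 1))" for p
      have img: "f ` {..<P} = X"
      proof
        show "f ` {..<P} \<subseteq> X" unfolding f_def using xs(1) l1 by auto
        show "X \<subseteq> f ` {..<P}"
        proof
          fix x assume "x \<in> X"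
          then obtain p where p: "p < length xs" "xs ! p = x" using xs(1) by (metis in_set_conv_nth)
          moreover have "p \<le> length xs - 1" using p by simp
          ultimately have "f p = x" unfolding f_def by (simp add: min_absorb1)
          moreover have "p \<in> {..<P}" using p lP by simp
          ultimately show "x \<in> f ` {..<P}" by blast
        qed
      qed
      have "restrict f {..<P} \<in> PiE {..<P} (\<lambda>_. T)" using img X by auto
      moreover have "restrict f {..<P} ` {..<P} = X" using img by auto
      ultimately show ?thesis by blast
    qed
  qed
  have "card {X. X \<subseteq> T \<and> card X \<le> P} \<le> card (insert {} ?F)"
    by (rule card_mono[OF _ sub]) (simp add: T finite_PiE)
  also have "\<dots> \<le> Suc (card ?F)" by (simp add: card_insert_if T finite_PiE)
  also have "card ?F \<le> card (PiE {..<P} (\<lambda>_. T))" by (rule card_image_le) (simp add: T finite_PiE)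
  also have "card (PiE {..<P} (\<lambda>_. T)) = card T ^ P" by (simp add: card_PiE)
  finally show ?thesis by simp
qed

context apx begin

lemma Nv_count:
  assumes o: "o' < s"
  shows "real (card (Nv th o')) \<le> real (card (Ls o')) + (\<Sum>r\<in>Ls o'. TVrow th r) / (d1 - eta/2) + TV_c m n th / (D - d1)"
proof -
  let ?RN = "\<lambda>r. {j. j < n \<and> rnov th r j}"
  let ?NC = "\<lambda>j. {i. i < m \<and> 0 < dd o' i \<and> cnov th o' i j}"
  have finL: "finite (Ls o')" unfolding Ls_def by simp
  have sub: "Nv th o' \<subseteq> (SIGMA r:Ls o'. ?RN r) \<union> (\<Union>j<n. ?NC j \<times> {j})"
    unfolding Nv_def Ls_def by auto
  have "card (Nv th o') \<le> card ((SIGMA r:Ls o'. ?RN r) \<union> (\<Union>j<n. ?NC j \<times> {j}))"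
    by (rule card_mono[OF _ sub]) (use finL in auto)
  also have "\<dots> \<le> card (SIGMA r:Ls o'. ?RN r) + card (\<Union>j<n. ?NC j \<times> {j})" by (rule card_Un_le)
  also have "card (SIGMA r:Ls o'. ?RN r) = (\<Sum>r\<in>Ls o'. card (?RN r))" using finL by simp
  also have "card (\<Union>j<n. ?NC j \<times> {j}) \<le> (\<Sum>j<n. card (?NC j \<times> {j}))" by (rule card_UN_le) simp
  also have "(\<Sum>j<n. card (?NC j \<times> {j})) = (\<Sum>j<n. card (?NC j))" by (simp add: card_cartesian_product)
  finally have c: "card (Nv th o') \<le> (\<Sum>r\<in>Ls o'. card (?RN r)) + (\<Sum>j<n. card (?NC j))" by simp
  then have "real (card (Nv th o')) \<le> real ((\<Sum>r\<in>Ls o'. card (?RN r)) + (\<Sum>j<n. card (?NC j)))"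
    by (simp only: of_nat_le_iff)
  also have "\<dots> = (\<Sum>r\<in>Ls o'. real (card (?RN r))) + (\<Sum>j<n. real (card (?NC j)))" by simp
  also have "\<dots> \<le> (\<Sum>r\<in>Ls o'. 1 + TVrow th r / (d1 - eta/2)) + (\<Sum>j<n. (\<Sum>l<m-1. g th j l) / (D - d1))"
    using row_count col_count[OF o] by (intro add_mono sum_mono) auto
  also have "\<dots> = real (card (Ls o')) + (\<Sum>r\<in>Ls o'. TVrow th r) / (d1 - eta/2) + TV_c m n th / (D - d1)"
    by (simp add: sum.distrib sum_divide_distrib TVc_eq)
  finally show ?thesis .
qed

lemma Ls_mod: "o' < s \<Longrightarrow> Ls o' = {r. r < m \<and> r mod s = o'}"
  unfolding Ls_def using dd_zero_iff by auto

lemma Ls_card: "o' < s \<Longrightarrow> real (card (Ls o')) \<le> real (m - 1) / real s + 1"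
proof -
  assume o: "o' < s"
  have inj: "inj_on (\<lambda>r. r div s) (Ls o')"
  proof (rule inj_onI)
    fix x y assume xy: "x \<in> Ls o'" "y \<in> Ls o'" "x div s = y div s"
    have mx: "x mod s = o'" using xy(1) Ls_mod[OF o] by simp
    have my: "y mod s = o'" using xy(2) Ls_mod[OF o] by simp
    have ex: "x = x div s * s + x mod s" by (rule div_mult_mod_eq[symmetric])
    have ey: "y = y div s * s + y mod s" by (rule div_mult_mod_eq[symmetric])
    show "x = y" using ex ey mx my xy(3) by simp
  qed
  have im: "(\<lambda>r. r div s) ` Ls o' \<subseteq> {..(m-1) div s}"
  proof
    fix z assume "z \<in> (\<lambda>r. r div s) ` Ls o'"
    then obtain r where r: "r \<in> Ls o'" "z = r div s" by blast
    have "r < m" using r(1) unfolding Ls_def by simp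
    then have "r \<le> m - 1" by arith
    then have "r div s \<le> (m-1) div s" by (rule div_le_mono)
    then show "z \<in> {..(m-1) div s}" using r(2) by simp
  qed
  have "card (Ls o') \<le> card {..(m-1) div s}"
    by (rule card_inj_on_le[OF inj im]) simp
  then have "card (Ls o') \<le> (m-1) div s + 1" by simp
  then have "real (card (Ls o')) \<le> real ((m-1) div s) + 1" by linarith
  also have "real ((m-1) div s) \<le> real (m-1) / real s" by (rule of_nat_div_le_of_nat)
  finally show ?thesis by simp
qed

lemma Ls_avg: "\<exists>o'<s. (\<Sum>r\<in>Ls o'. f r) \<le> (\<Sum>r<m. f r) / real s"
proof (rule ccontr)
  assume "\<not> ?thesis"
  then have lt: "\<And>o'. o' \<in> {..<s} \<Longrightarrow> (\<Sum>r<m. f r) / real s < (\<Sum>r\<in>Ls o'. f r)" by auto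
  have "(\<Sum>o'<s. (\<Sum>r<m. f r) / real s) < (\<Sum>o'<s. \<Sum>r\<in>Ls o'. f r)"
    by (rule sum_strict_mono) (use s1 lt in \<open>auto simp: lessThan_empty_iff\<close>)
  also have "(\<Sum>o'<s. \<Sum>r\<in>Ls o'. f r) = (\<Sum>o'<s. \<Sum>r\<in>{x. x \<in> {..<m} \<and> x mod s = o'}. f r)"
    by (rule sum.cong[OF refl]) (simp add: Ls_mod)
  also have "\<dots> = (\<Sum>r<m. f r)" by (rule sum.group[of "{..<m}" "{..<s}" "\<lambda>r. r mod s" f]) (use s1 in auto)
  finally show False using s1 by simp
qed

definition K :: int where "K = \<lceil>1/eta\<rceil> + 1"

lemma round_bound:
  assumes "\<bar>x\<bar> \<le> 1"
  shows "-K \<le> round (x/eta) \<and> round (x/eta) \<le> K"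
proof -
  have h1: "\<bar>of_int (round (x/eta)) - x/eta\<bar> \<le> 1/2" by (rule of_int_round_abs_le)
  have h2: "\<bar>x/eta\<bar> \<le> 1/eta" using assms eta by (simp add: abs_div divide_right_mono)
  have h3: "1/eta \<le> of_int \<lceil>1/eta\<rceil>" by (rule le_of_int_ceiling)
  have "\<bar>of_int (round (x/eta))\<bar> \<le> \<bar>of_int (round (x/eta)) - x/eta\<bar> + \<bar>x/eta\<bar>"
    using abs_triangle_ineq[of "of_int (round (x/eta)) - x/eta" "x/eta"] by simp
  moreover have "real_of_int K = of_int \<lceil>1/eta\<rceil> + 1" unfolding K_def by simp
  ultimately have "\<bar>of_int (round (x/eta))\<bar> \<le> real_of_int K" using h1 h2 h3 by linarith
  then have "\<bar>round (x/eta)\<bar> \<le> K" by linarith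
  then show ?thesis by (simp add: abs_le_iff)
qed

lemma Nv_fin: "finite (Nv th o')"
proof -
  have "Nv th o' \<subseteq> {..<m} \<times> {..<n}" unfolding Nv_def by auto
  then show ?thesis by (rule finite_subset) simp
qed

lemma Xs_sub:
  assumes "\<And>i j. \<bar>th i j\<bar> \<le> 1"
  shows "Xs th o' \<subseteq> {..<m} \<times> {..<n} \<times> {-K..K}"
  unfolding Xs_def Nv_def using round_bound assms by auto

lemma Xs_card: "card (Xs th o') \<le> card (Nv th o')"
  unfolding Xs_def by (rule card_image_le) (rule Nv_fin)

end


lemma calA_entry:
  assumes th: "th \<in> calA m n u v t" and t: "t \<le> 1"
  shows "\<bar>th i j\<bar> \<le> 1"
proof (cases "i < m \<and> j < n")
  case False
  then have "th i j = 0" using th unfolding calA_def mats_def by auto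
  then show ?thesis by simp
next
  case True
  have fr: "frob m n th \<le> 1" using th t unfolding calA_def by auto
  have "(th i j)^2 \<le> (\<Sum>j'<n. (th i j')^2)"
    by (rule member_le_sum[of j "{..<n}" "\<lambda>j'. (th i j')^2", simplified]) (use True in auto)
  also have "\<dots> \<le> (\<Sum>i'<m. \<Sum>j'<n. (th i' j')^2)"
    by (rule member_le_sum[of i "{..<m}" "\<lambda>i'. \<Sum>j'<n. (th i' j')^2", simplified]) (use True in \<open>auto intro: sum_nonneg\<close>)
  also have "\<dots> = (frob m n th)^2" unfolding frob_def by (simp add: sum_nonneg)
  also have "\<dots> \<le> 1" by (rule power_le_one) (use fr in \<open>auto simp: frob_def sum_nonneg\<close>)
  finally have "(th i j)^2 \<le> 1" .
  then show ?thesis by (simp add: abs_square_le_1)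
qed

lemma covnum_le:
  assumes "finite S" "S \<subseteq> mats m n"
    "A \<subseteq> (\<Union>c\<in>S. {th \<in> mats m n. frob m n (\<lambda>i j. th i j - c i j) \<le> tau})"
  shows "covnum m n A tau \<le> card S"
  unfolding covnum_def by (rule cINF_lower) (use assms in auto)



locale cov =
  fixes m n :: nat and u v t tau :: real and s :: nat
  assumes cm: "0 < m" and cn: "0 < n" and cu: "0 \<le> u" and cv: "0 \<le> v" and ct: "t \<le> 1"
    and ctau: "0 < tau" and ctau1: "tau \<le> 1" and cs1: "1 \<le> s" and csm: "s \<le> m"
begin

definition cd1 :: real where "cd1 = tau / (2 * sqrt (2 * real m * real n))"
definition ceta :: real where "ceta = cd1/2"
definition cc :: real where "cc = (if 1 < s \<and> 0 < v then tau^2/(4 * real (s-1)* v) else 2* v+1)"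
definition cD :: real where "cD = max cc (2 * cd1)"
definition Pr :: real where "Pr = real (m-1)/real s + 1 + 4 * u * sqrt(real m * real n)/(real s * tau) + 8 * real(s-1)* v^2/tau^2 + 1"

lemma mn1: "1 \<le> real m * real n"
proof -
  have "1 * 1 \<le> real m * real n" by (rule mult_mono) (use cm cn in auto)
  then show ?thesis by simp
qed

lemma cd1pos: "0 < cd1" unfolding cd1_def using ctau mn1 by simp

lemma cc_pos: "0 < cc"
  unfolding cc_def using ctau cv cs1 by (auto intro!: divide_pos_pos)

sublocale apx m n s cd1 cD ceta
  by unfold_locales (use cs1 csm cd1pos in \<open>auto simp: ceta_def cD_def\<close>)

lemma N1: "4 * real m * real n * cd1^2 = tau^2/2"
proof -
  have sq: "(sqrt (2 * real m * real n))^2 = 2 * real m * real n" using mn1 by simp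
  have a: "cd1^2 = tau^2 / (2 * sqrt (2 * real m * real n))^2" by (simp add: cd1_def power_divide)
  have b: "(2 * sqrt (2 * real m * real n))^2 = 8 * (real m * real n)" using sq by (simp add: power_mult_distrib)
  have "4 * real m * real n * cd1^2 = 4 * (real m * real n) * (tau^2 / (8 * (real m * real n)))"
    unfolding a b by simp
  also have "\<dots> = tau^2/2" using cm cn by (simp add: field_simps)
  finally show ?thesis .
qed

lemma err_budget:
  assumes "0 \<le> X" "X \<le> v"
  shows "4 * real m * real n * cd1^2 + 2 * cc * real (s-1) * X \<le> tau^2"
proof (cases "1 < s \<and> 0 < v")
  case True
  have "2 * cc * real (s-1) * X \<le> 2 * cc * real (s-1)* v"
    using assms cc_pos by (intro mult_left_mono) auto
  also have "2 * cc * real (s-1)* v = tau^2/2" unfolding cc_def using True by (simp add: field_simps)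
  finally show ?thesis using N1 by simp
next
  case False
  then have "real (s-1) = 0 \<or> X = 0" using assms cs1 by auto
  then have z: "2 * cc * real (s-1) * X = 0" by auto
  have "tau^2/2 \<le> tau^2" by simp
  then show ?thesis using N1 z by linarith
qed

lemma col_budget:
  assumes "0 \<le> X" "X \<le> v"
  shows "X / (cD - cd1) \<le> 8 * real(s-1)* v^2/tau^2 + 1"
proof -
  have Dc: "cc \<le> cD" "2 * cd1 \<le> cD" unfolding cD_def by auto
  have pos: "0 < cD - cd1" using Dc cd1pos by simp
  have "X / (cD - cd1) \<le> v / (cD - cd1)" using assms pos by (simp add: divide_right_mono)
  also have "\<dots> \<le> v / (cc/2)"
    using Dc cc_pos cv cd1pos by (intro divide_left_mono) auto
  also have "\<dots> \<le> 8 * real(s-1)* v^2/tau^2 + 1"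
  proof (cases "1 < s \<and> 0 < v")
    case True
    then have "v / (cc/2) = 8 * real(s-1)* v^2/tau^2" unfolding cc_def using ctau
      by (simp add: field_simps power2_eq_square)
    then show ?thesis by simp
  next
    case False
    then have "cc = 2 * v+1" unfolding cc_def by auto
    then have "v / (cc/2) = 2 * v/(2 * v+1)" by simp
    also have "\<dots> \<le> 1" using cv by simp
    finally have "v / (cc/2) \<le> 1" .
    moreover have "0 \<le> 8 * real (s-1) * v^2/tau^2" by simp
    ultimately show ?thesis by linarith
  qed
  finally show ?thesis .
qed

lemma row_budget:
  assumes "X \<le> u / real s"
  shows "X / (cd1 - ceta/2) \<le> 4 * u * sqrt(real m * real n)/(real s * tau)"
proof -
  have e: "cd1 - ceta/2 = 3 * cd1/4" unfolding ceta_def by simp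
  have pos: "0 < cd1 - ceta/2" using e cd1pos by simp
  have "X / (cd1 - ceta/2) \<le> (u / real s) / (cd1 - ceta/2)" by (rule divide_right_mono[OF assms]) (use pos in simp)
  also have "(u / real s) / (cd1 - ceta/2) = 4 * u / (3 * real s * cd1)"
    unfolding e using cd1pos cs1 by (simp add: field_simps)
  also have "\<dots> = 8 * u * sqrt (2 * real m * real n) / (3 * real s * tau)"
  proof -
    have sqpos: "0 < sqrt (2 * real m * real n)" using mn1 by simp
    show ?thesis unfolding cd1_def using ctau cs1 sqpos by (simp add: field_simps)
  qed
  also have "sqrt (2 * real m * real n) = sqrt 2 * sqrt (real m * real n)"
    using real_sqrt_mult[of 2 "real m * real n"] by (simp add: mult.assoc)
  also have "8 * u * (sqrt 2 * sqrt (real m * real n)) / (3 * real s * tau) = 8 * sqrt 2 * u * sqrt (real m * real n) / (3 * real s * tau)"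
    by (simp add: mult_ac)
  also have "\<dots> \<le> 4 * u * sqrt(real m * real n)/(real s * tau)"
  proof -
    have "sqrt 2 \<le> 3/2" by (rule real_le_lsqrt) (auto simp: power2_eq_square)
    then have "8 * sqrt 2 \<le> 3 * 4" by simp
    then have "8 * sqrt 2 * (u * sqrt (real m * real n)) \<le> 3 * 4 * (u * sqrt (real m * real n))"
      using cu by (intro mult_right_mono) auto
    then show ?thesis using ctau cs1 by (simp add: field_simps)
  qed
  finally show ?thesis .
qed

end


context cov begin

lemma TVc_nonneg: "0 \<le> TV_c m n th"
  by (simp add: TV_c_def TV_r_def sum_nonneg)

lemma approx:
  assumes th: "th \<in> calA m n u v t"
  shows "\<exists>o'<s. real (card (Xs th o')) \<le> Pr \<and> frob m n (\<lambda>i j. th i j - App th o' i j) \<le> tau"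
proof -
  obtain o' where o: "o' < s" and av: "(\<Sum>r\<in>Ls o'. TVrow th r) \<le> (\<Sum>r<m. TVrow th r) / real s"
    using Ls_avg[of "TVrow th"] by blast
  have tvr: "TV_r m n th \<le> u" and tvc: "TV_c m n th \<le> v" using th unfolding calA_def by auto
  have av2: "(\<Sum>r\<in>Ls o'. TVrow th r) \<le> u / real s"
    using av tvr cs1 unfolding TVr_eq[symmetric] by (meson divide_right_mono of_nat_0_le_iff order_trans)
  have "real (card (Nv th o')) \<le> real (card (Ls o')) + (\<Sum>r\<in>Ls o'. TVrow th r) / (cd1 - ceta/2) + TV_c m n th / (cD - cd1)"
    by (rule Nv_count[OF o])
  also have "\<dots> \<le> (real (m - 1) / real s + 1) + 4 * u * sqrt(real m * real n)/(real s * tau) + (8 * real(s-1) * v^2/tau^2 + 1)"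
    using Ls_card[OF o] row_budget[OF av2] col_budget[OF TVc_nonneg tvc] by (intro add_mono) auto
  also have "\<dots> = Pr" unfolding Pr_def by simp
  finally have cN: "real (card (Nv th o')) \<le> Pr" .
  have cX: "real (card (Xs th o')) \<le> Pr" using Xs_card[of th o'] cN by (meson of_nat_le_iff order_trans)
  have "(\<Sum>i<m. \<Sum>j<n. (th i j - App th o' i j)^2) \<le> 4 * real m * real n * cd1^2 + 2 * cc * real (s-1) * TV_c m n th"
    using total_err[OF o cc_pos, of th] unfolding cD_def by simp
  also have "\<dots> \<le> tau^2" by (rule err_budget[OF TVc_nonneg tvc])
  finally have le: "(\<Sum>i<m. \<Sum>j<n. (th i j - App th o' i j)^2) \<le> tau^2" .
  have "sqrt (\<Sum>i<m. \<Sum>j<n. (th i j - App th o' i j)^2) \<le> tau" using real_sqrt_le_mono[OF le] ctau by simp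
  then have "frob m n (\<lambda>i j. th i j - App th o' i j) \<le> tau" unfolding frob_def using ctau by simp
  then show ?thesis using o cX by blast
qed

definition "Tset = {..<m} \<times> {..<n} \<times> {-K..K}"
definition "PP = nat \<lfloor>Pr\<rfloor>"

lemma covering: "real (covnum m n (calA m n u v t) tau) \<le> real s * (real (card Tset) ^ PP + 1)"
proof -
  let ?A = "calA m n u v t"
  define ofn where "ofn th = (SOME o'. o' < s \<and> real (card (Xs th o')) \<le> Pr \<and> frob m n (\<lambda>i j. th i j - App th o' i j) \<le> tau)" for th
  have ofn: "ofn th < s \<and> real (card (Xs th (ofn th))) \<le> Pr \<and> frob m n (\<lambda>i j. th i j - App th (ofn th) i j) \<le> tau"
    if "th \<in> ?A" for th
    unfolding ofn_def by (rule someI_ex) (use approx[OF that] in blast)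
  define H where "H th = (ofn th, Xs th (ofn th))" for th
  define Par where "Par = {..<s} \<times> {X. X \<subseteq> Tset \<and> card X \<le> PP}"
  have finT: "finite Tset" unfolding Tset_def by simp
  have finPar: "finite Par" unfolding Par_def using finT by simp
  have HPar: "H ` ?A \<subseteq> Par"
  proof
    fix p assume "p \<in> H ` ?A"
    then obtain th where th: "th \<in> ?A" "p = H th" by blast
    have "Xs th (ofn th) \<subseteq> Tset" unfolding Tset_def
      by (rule Xs_sub) (rule calA_entry[OF th(1) ct])
    moreover have "card (Xs th (ofn th)) \<le> PP" unfolding PP_def using ofn[OF th(1)] by (intro le_nat_floor) auto
    ultimately show "p \<in> Par" unfolding Par_def H_def th(2) using ofn[OF th(1)] by auto
  qed
  define G where "G p = App (SOME th. th \<in> ?A \<and> H th = p) (fst p)" for p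
  have GH: "G (H th) = App th (ofn th)" if th: "th \<in> ?A" for th
  proof -
    define th' where "th' = (SOME th'. th' \<in> ?A \<and> H th' = H th)"
    have th': "th' \<in> ?A \<and> H th' = H th" unfolding th'_def
      using someI_ex[of "\<lambda>x. x \<in> ?A \<and> H x = H th"] th by blast
    then have "ofn th' = ofn th" "Xs th' (ofn th') = Xs th (ofn th)" unfolding H_def by auto
    then have "Xs th' (ofn th) = Xs th (ofn th)" by simp
    then have "App th' (ofn th) = App th (ofn th)" by (rule App_det[OF conjunct1[OF ofn[OF th]]])
    then show ?thesis unfolding G_def th'_def H_def by simp
  qed
  define S0 where "S0 = G ` (H ` ?A)"
  have finS0: "finite S0" unfolding S0_def using finite_subset[OF HPar finPar] by simp
  have "covnum m n ?A tau \<le> card S0"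
  proof (rule covnum_le[OF finS0])
    show "S0 \<subseteq> mats m n" unfolding S0_def G_def using App_mats by auto
    show "?A \<subseteq> (\<Union>c\<in>S0. {th \<in> mats m n. frob m n (\<lambda>i j. th i j - c i j) \<le> tau})"
    proof
      fix th assume th: "th \<in> ?A"
      have "G (H th) \<in> S0" unfolding S0_def using th by blast
      moreover have "th \<in> mats m n" using th unfolding calA_def by auto
      ultimately show "th \<in> (\<Union>c\<in>S0. {th \<in> mats m n. frob m n (\<lambda>i j. th i j - c i j) \<le> tau})"
        using GH[OF th] ofn[OF th] by auto
    qed
  qed
  also have "card S0 \<le> card (H ` ?A)" unfolding S0_def by (rule card_image_le) (rule finite_subset[OF HPar finPar])
  also have "\<dots> \<le> card Par" by (rule card_mono[OF finPar HPar])
  also have "card Par = s * card {X. X \<subseteq> Tset \<and> card X \<le> PP}" unfolding Par_def by (simp add: card_cartesian_product)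
  also have "\<dots> \<le> s * (card Tset ^ PP + 1)" by (intro mult_le_mono2 subsets_card finT)
  finally have "covnum m n ?A tau \<le> s * (card Tset ^ PP + 1)" .
  then have "real (covnum m n ?A tau) \<le> real (s * (card Tset ^ PP + 1))" by (simp only: of_nat_le_iff)
  then show ?thesis by (simp add: distrib_left)
qed

end


context cov begin

lemma Z1: "1 \<le> real m * real n / tau"
  using mn1 ctau ctau1 by (simp add: le_divide_eq)

lemma K_ge: "1 \<le> K"
proof -
  have h: "0 < 1/ceta" using eta by simp
  then have "0 < \<lceil>1/ceta\<rceil>" using zero_less_ceiling[of "1/ceta"] by blast
  then show ?thesis unfolding K_def by linarith
qed

lemma card_T: "real (card Tset) = real m * real n * (2 * real_of_int K + 1)"
proof -
  have "card Tset = m * (n * nat (2*K + 1))" unfolding Tset_def by (simp add: card_cartesian_product)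
  moreover have "real (nat (2*K+1)) = 2 * real_of_int K + 1" using K_ge by simp
  ultimately show ?thesis by simp
qed

lemma A_lower: "2 * real s \<le> real (card Tset)"
proof -
  have "2 * real s \<le> 3 * real m" using csm by simp
  also have "\<dots> \<le> real m * real n * 3"
  proof -
    have "real m * 1 \<le> real m * real n" using cn by (intro mult_left_mono) auto
    then show ?thesis by simp
  qed
  also have "\<dots> \<le> real m * real n * (2 * real_of_int K + 1)" using K_ge mn1 by (intro mult_left_mono) auto
  finally show ?thesis using card_T by simp
qed

lemma A_upper: "real (card Tset) \<le> (exp 1 * real m * real n / tau)^5"
proof -
  define Z where "Z = real m * real n / tau"
  have Z: "1 \<le> Z" unfolding Z_def by (rule Z1)
  have mnZ: "real m * real n \<le> Z" unfolding Z_def using ctau ctau1 mn1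
    by (simp add: le_divide_eq mult_left_le)
  have sq: "sqrt (2 * real m * real n) \<le> 2 * real m * real n"
  proof -
    define x where "x = 2 * real m * real n"
    have x1: "1 \<le> x" unfolding x_def using mn1 by simp
    have "x * 1 \<le> x * x" using x1 by (intro mult_left_mono) auto
    then have "x \<le> x^2" by (simp add: power2_eq_square)
    then have "sqrt x \<le> sqrt (x^2)" by (simp only: real_sqrt_le_iff)
    also have "sqrt (x^2) = x" using x1 by simp
    finally show ?thesis unfolding x_def .
  qed
  have inv: "1/ceta = 4 * sqrt (2 * real m * real n) / tau"
    unfolding ceta_def cd1_def using ctau mn1 by (simp add: field_simps)
  have "1/ceta \<le> 8 * Z"
  proof -
    have "4 * sqrt (2 * real m * real n) / tau \<le> 4 * (2 * real m * real n) / tau"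
      using sq ctau by (intro divide_right_mono) auto
    then show ?thesis unfolding inv Z_def by simp
  qed
  moreover have "of_int \<lceil>1/ceta\<rceil> \<le> 1/ceta + 1" by (rule of_int_ceiling_le_add_one)
  moreover have "real_of_int K = of_int \<lceil>1/ceta\<rceil> + 1" by (simp add: K_def)
  ultimately have Kb: "real_of_int K \<le> 8 * Z + 2" by linarith
  have "real (card Tset) = real m * real n * (2 * real_of_int K + 1)" by (rule card_T)
  also have "\<dots> \<le> Z * (21 * Z)"
    using mnZ Kb Z mn1 K_ge by (intro mult_mono) auto
  also have "\<dots> \<le> 32 * Z^5"
  proof -
    have "Z^2 \<le> Z^5" using Z by (intro power_increasing) auto
    then have a: "Z * Z \<le> Z^5" by (simp add: power2_eq_square)
    have b: "0 \<le> Z * Z" by simp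
    have c: "Z * (21 * Z) = 21 * (Z * Z)" by simp
    show ?thesis using a b unfolding c by linarith
  qed
  also have "\<dots> \<le> (exp 1 * Z)^5"
  proof -
    have "2 \<le> exp (1::real)" using exp_ge_add_one_self[of 1] by simp
    then have "2 * Z \<le> exp 1 * Z" using Z by (intro mult_right_mono) auto
    then have "(2 * Z)^5 \<le> (exp 1 * Z)^5" using Z by (intro power_mono) auto
    then show ?thesis by (simp add: power_mult_distrib)
  qed
  finally show ?thesis unfolding Z_def by (simp add: mult.assoc)
qed

lemma final_cov:
  "ln (real (covnum m n (calA m n u v t) tau)) \<le> 5 * (Pr + 1) * ln (exp 1 * real m * real n / tau)"
proof -
  let ?N = "real (covnum m n (calA m n u v t) tau)"
  let ?A = "real (card Tset)"
  let ?L = "ln (exp 1 * real m * real n / tau)"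
  have Lp: "1 \<le> ?L"
  proof -
    have "exp 1 * 1 \<le> exp 1 * (real m * real n / tau)" by (rule mult_left_mono[OF Z1]) simp
    then have "exp 1 \<le> exp 1 * (real m * real n / tau)" by simp
    then have "ln (exp 1) \<le> ln (exp 1 * (real m * real n / tau))" by (rule ln_mono) simp
    then show ?thesis by (simp add: mult.assoc)
  qed
  have Prp: "0 \<le> Pr" unfolding Pr_def using cu ctau cs1 by (simp add: add_nonneg_nonneg)
  have PPle: "real PP \<le> Pr" unfolding PP_def using Prp by simp
  show ?thesis
  proof (cases "?N = 0")
    case True
    then show ?thesis using Lp Prp by simp
  next
    case False
    then have Npos: "0 < ?N" by simp
    have A1: "1 \<le> ?A" using A_lower cs1 by simp
    have "?N \<le> real s * (?A ^ PP + 1)" by (rule covering)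
    also have "\<dots> \<le> real s * (2 * ?A ^ PP)"
    proof -
      have "1 \<le> ?A ^ PP" using A1 by simp
      then show ?thesis by (intro mult_left_mono) auto
    qed
    also have "\<dots> = (2 * real s) * ?A ^ PP" by simp
    also have "\<dots> \<le> ?A * ?A ^ PP" using A_lower by (intro mult_right_mono) auto
    also have "\<dots> = ?A ^ Suc PP" by simp
    also have "\<dots> \<le> ((exp 1 * real m * real n / tau)^5) ^ Suc PP" using A_upper A1 by (intro power_mono) auto
    also have "\<dots> = (exp 1 * real m * real n / tau) ^ (5 * Suc PP)" by (rule power_mult[symmetric])
    finally have Nle: "?N \<le> (exp 1 * real m * real n / tau) ^ (5 * Suc PP)" .
    have bpos: "0 < exp 1 * real m * real n / tau" using ctau cm cn by simp
    have "ln ?N \<le> ln ((exp 1 * real m * real n / tau) ^ (5 * Suc PP))" by (rule ln_mono[OF Nle Npos])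
    also have "\<dots> = real (5 * Suc PP) * ?L" by (rule ln_realpow)
    also have "\<dots> \<le> 5 * (Pr + 1) * ?L" using PPle Lp by (intro mult_right_mono) auto
    finally show ?thesis .
  qed
qed

end


lemma alpha_bound:
  fixes m k :: nat and a :: real
  assumes k1: "1 \<le> k" and km: "k \<le> m" and a: "0 \<le> a"
  shows "real m + 4 * a * sqrt (real m) \<le> 4 * (real m / real k) * (real k + a * sqrt (real k))"
proof -
  have kp: "0 < real k" using k1 by simp
  have rk: "0 < sqrt (real k)" using kp by simp
  have e: "(real m / real k) * (real k + a * sqrt (real k)) = real m + a * real m / sqrt (real k)"
  proof -
    have "sqrt (real k) * sqrt (real k) = real k" using kp by simp
    then show ?thesis using kp rk by (simp add: field_simps)
  qed
  have "sqrt (real m) * sqrt (real k) \<le> real m"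
  proof -
    have "sqrt (real m) * sqrt (real k) = sqrt (real m * real k)" by (simp add: real_sqrt_mult)
    also have "\<dots> \<le> sqrt (real m * real m)" using km by (intro real_sqrt_le_mono mult_left_mono) auto
    also have "\<dots> = real m" by simp
    finally show ?thesis .
  qed
  then have "sqrt (real m) \<le> real m / sqrt (real k)" using rk by (simp add: field_simps)
  then have "4 * a * sqrt (real m) \<le> 4 * a * (real m / sqrt (real k))" using a by (intro mult_left_mono) auto
  moreover have "0 \<le> real m" by simp
  ultimately show ?thesis unfolding mult.assoc[of 4] e by (simp add: field_simps)
qed

lemma choose_s:
  fixes m k :: nat and a w :: real
  assumes k1: "1 \<le> k" and km: "k < m" and a: "0 \<le> a" and w: "0 \<le> w"
  shows "\<exists>s. 1 \<le> s \<and> s \<le> m \<and>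
    real (m-1) / real s + 3 + 4 * a * sqrt (real m) / real s + 8 * real (s-1) * w^2
    \<le> 19 * (real k + a * sqrt (real k)) + 16 * sqrt (real k + a * sqrt (real k)) * (w * sqrt (real m) / sqrt (real k))"
proof -
  define J0 where "J0 = real k + a * sqrt (real k)"
  define X where "X = w * sqrt (real m) / sqrt (real k)"
  define al where "al = real m + 4 * a * sqrt (real m)"
  define B where "B s = real (m-1) / real s + 3 + 4 * a * sqrt (real m) / real s + 8 * real (s-1) * w^2" for s :: nat
  have kp: "0 < real k" using k1 by simp
  have J01: "1 \<le> J0" unfolding J0_def using k1 a by (simp add: add_increasing2)
  have X0: "0 \<le> X" unfolding X_def using w by simp
  have F2: "al \<le> 4 * (real m / real k) * J0" unfolding al_def J0_def by (rule alpha_bound) (use k1 km a in auto)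
  have X2: "X^2 = w^2 * (real m / real k)" unfolding X_def using kp by (simp add: power_divide power_mult_distrib)
  have Bs: "B s \<le> al / real s + 3 + 8 * real (s-1) * w^2" if "1 \<le> s" for s
  proof -
    have "real (m-1) \<le> real m" by simp
    then have "real (m-1) / real s \<le> real m / real s" using that by (intro divide_right_mono) auto
    then show ?thesis unfolding B_def al_def by (simp add: add_divide_distrib)
  qed
  have pXnn: "0 \<le> sqrt J0 * X" using X0 J01 by simp
  show ?thesis
  proof (cases "X^2 \<le> J0")
    case True
    define s where "s = m div k"
    have "0 < m div k" using k1 km by (simp add: div_greater_zero_iff)
    then have s1: "1 \<le> s" unfolding s_def by simp
    have sm: "s \<le> m" unfolding s_def by simp
    have sk: "s * k \<le> m" unfolding s_def by (rule div_times_less_eq_dividend)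
    have m2: "m \<le> 2 * (k * s)"
    proof -
      have "m = s * k + m mod k" unfolding s_def by simp
      moreover have "m mod k < k" using k1 by simp
      ultimately have "m < k * s + k" by (simp add: mult.commute)
      moreover have "k \<le> k * s" using s1 by simp
      ultimately show ?thesis by linarith
    qed
    have "al / real s \<le> 4 * (real m / real k) * J0 / real s" using F2 s1 by (intro divide_right_mono) auto
    also have "\<dots> = 4 * J0 * (real m / (real k * real s))" using s1 kp by (simp add: field_simps)
    also have "\<dots> \<le> 4 * J0 * 2"
    proof -
      have "real m \<le> real (2 * (k * s))" using m2 by (simp only: of_nat_le_iff)
      then have "real m \<le> 2 * (real k * real s)" by simp
      then have "real m / (real k * real s) \<le> 2" using s1 kp by (simp add: divide_le_eq)
      then show ?thesis using J01 by (intro mult_left_mono) auto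
    qed
    finally have b1: "al / real s \<le> 8 * J0" by simp
    have "8 * real (s-1) * w^2 \<le> 8 * real s * w^2" by (intro mult_right_mono) auto
    also have "\<dots> \<le> 8 * (real m / real k) * w^2"
    proof -
      have "real (s * k) \<le> real m" using sk by (simp only: of_nat_le_iff)
      then have "real s * real k \<le> real m" by simp
      then have "real s \<le> real m / real k" using kp by (simp add: le_divide_eq)
      then show ?thesis by (intro mult_right_mono mult_left_mono) auto
    qed
    also have "\<dots> = 8 * X^2" using X2 by simp
    also have "\<dots> \<le> 8 * J0" using True by simp
    finally have b2: "8 * real (s-1) * w^2 \<le> 8 * J0" .
    have "B s \<le> 19 * J0 + 16 * sqrt J0 * X" using Bs[OF s1] b1 b2 J01 pXnn by linarith
    then show ?thesis using s1 sm unfolding B_def J0_def X_def by blast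
  next
    case False
    define p where "p = sqrt J0"
    have p0: "0 < p" unfolding p_def using J01 by simp
    have pp: "p * p = J0" unfolding p_def using J01 by simp
    have pX: "p < X"
    proof (rule ccontr)
      assume "\<not> p < X"
      then have "X * X \<le> p * p" using X0 p0 by (intro mult_mono) auto
      then show False using False pp by (simp add: power2_eq_square)
    qed
    define y where "y = (real m / real k) * p / X"
    have Xp: "0 < X" using pX p0 by simp
    have ypos: "0 < y" unfolding y_def using p0 Xp kp km by simp
    have yJ: "(real m / real k) * J0 = y * (p * X)" unfolding y_def using Xp pp by (simp add: field_simps)
    have yw: "w^2 * y = p * X"
    proof -
      have "w^2 * y = (w^2 * (real m / real k)) * p / X" unfolding y_def by (simp add: mult.assoc)
      also have "\<dots> = X^2 * p / X" using X2 by simp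
      also have "\<dots> = p * X" using Xp by (simp add: power2_eq_square)
      finally show ?thesis .
    qed
    have ym: "y < real m"
    proof -
      have "p / X < 1" using pX p0 by simp
      then have "(real m / real k) * (p / X) < (real m / real k) * 1" using km kp by (intro mult_strict_left_mono) auto
      also have "\<dots> \<le> real m"
      proof -
        have "real m * 1 \<le> real m * real k" using k1 by (intro mult_left_mono) auto
        then show ?thesis using kp by (simp add: divide_le_eq)
      qed
      finally show ?thesis unfolding y_def by simp
    qed
    show ?thesis
    proof (cases "y < 1")
      case True
      have "B 1 \<le> al + 3" using Bs[of 1] by simp
      moreover have "al \<le> 4 * (y * (p * X))" using F2 yJ by simp
      moreover have "y * (p * X) \<le> 1 * (p * X)" using True p0 Xp by (intro mult_right_mono) auto
      ultimately have "B 1 \<le> 4 * (p * X) + 3" by linarith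
      then have "B 1 \<le> 19 * J0 + 16 * sqrt J0 * X" using pXnn p_def J01 by simp
      then show ?thesis using km unfolding B_def J0_def X_def by (intro exI[of _ 1]) auto
    next
      case False
      define s where "s = nat \<lfloor>y\<rfloor>"
      have s1: "1 \<le> s" unfolding s_def by (rule le_nat_floor) (use False in simp)
      have sf: "real s = real_of_int \<lfloor>y\<rfloor>" unfolding s_def using ypos by simp
      have sy: "real s \<le> y" unfolding sf by (rule of_int_floor_le)
      have ys: "y < real s + 1" unfolding sf by (rule real_of_int_floor_add_one_gt)
      have y2: "y \<le> 2 * real s" using ys s1 by simp
      have sm: "s \<le> m" using sy ym by simp
      have "al / real s \<le> 4 * (real m / real k) * J0 / real s" using F2 s1 by (intro divide_right_mono) auto
      also have "\<dots> = 4 * ((real m / real k) * J0) / real s" by (simp add: mult.assoc)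
      also have "\<dots> = 4 * (y * (p * X)) / real s" by (simp only: yJ)
      also have "\<dots> = 4 * (p * X) * (y / real s)" by simp
      also have "\<dots> \<le> 4 * (p * X) * 2" using y2 s1 p0 Xp by (intro mult_left_mono) (auto simp: divide_le_eq)
      finally have b1: "al / real s \<le> 8 * (p * X)" by simp
      have "8 * real (s-1) * w^2 \<le> 8 * y * w^2" using sy by (intro mult_right_mono mult_left_mono) auto
      also have "\<dots> = 8 * (p * X)" using yw by (simp add: mult.commute mult.left_commute)
      finally have b2: "8 * real (s-1) * w^2 \<le> 8 * (p * X)" .
      have "B s \<le> 19 * J0 + 16 * sqrt J0 * X" using Bs[OF s1] b1 b2 J01 p_def by simp
      then show ?thesis using s1 sm unfolding B_def J0_def X_def by blast
    qed
  qed
qed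



lemma main_lemma:
  fixes m n k :: nat and u v t tau :: real
  assumes m: "0 < m" and n: "0 < n" and u: "0 \<le> u" and v: "0 \<le> v" and t: "t \<le> 1"
    and tau: "0 < tau" and tau1: "tau \<le> 1" and k1: "1 \<le> k" and km: "k \<le> m"
  shows "(let J = 100 * ln (exp 1 * real n) * (real k + u * sqrt (real n * real k) / tau);
          L = ln (real (covnum m n (calA m n u v t) tau));
          Q = J + sqrt J * (v * sqrt (real m)) / (tau * sqrt (real k))
      in (k < m \<longrightarrow> L \<le> 100 * Q * (ln Q + ln (exp 1 * real m * real n / tau))) \<and>
         (k = m \<longrightarrow> L \<le> 100 * J * (ln J + ln (exp 1 * real m * real n / tau))))"
proof -
  define a where "a = u * sqrt (real n) / tau"
  define w where "w = v / tau"
  define J0 where "J0 = real k + a * sqrt (real k)"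
  define X where "X = w * sqrt (real m) / sqrt (real k)"
  define ell where "ell = ln (exp 1 * real n)"
  define J where "J = 100 * ln (exp 1 * real n) * (real k + u * sqrt (real n * real k) / tau)"
  define L where "L = ln (real (covnum m n (calA m n u v t) tau))"
  define Q where "Q = J + sqrt J * (v * sqrt (real m)) / (tau * sqrt (real k))"
  define Lam where "Lam = ln (exp 1 * real m * real n / tau)"
  have a0: "0 \<le> a" unfolding a_def using u tau by simp
  have w0: "0 \<le> w" unfolding w_def using v tau by simp
  have kp: "0 < real k" using k1 by simp
  have J01: "1 \<le> J0" unfolding J0_def using k1 a0 by (simp add: add_increasing2)
  have X0: "0 \<le> X" unfolding X_def using w0 by simp
  have ell1: "1 \<le> ell"
  proof -
    have "ell = 1 + ln (real n)" unfolding ell_def using n by (simp add: ln_mult)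
    moreover have "0 \<le> ln (real n)" using n by simp
    ultimately show ?thesis by simp
  qed
  have JJ0: "J = 100 * ell * J0"
  proof -
    have "u * sqrt (real n * real k) / tau = a * sqrt (real k)" unfolding a_def by (simp add: real_sqrt_mult)
    then show ?thesis unfolding J_def J0_def ell_def by simp
  qed
  have J100: "100 * J0 \<le> J"
  proof -
    have "100 * J0 * 1 \<le> 100 * J0 * ell" using ell1 J01 by (intro mult_left_mono) auto
    then show ?thesis unfolding JJ0 by (simp add: mult_ac)
  qed
  have J1: "1 \<le> J" using J100 J01 by simp
  have sJ: "sqrt J0 \<le> sqrt J" using J100 J01 by simp
  have QX: "Q = J + sqrt J * X"
    unfolding Q_def X_def w_def using tau kp by simp
  have QJ: "J \<le> Q" unfolding QX using X0 J1 by simp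
  have lnQ: "0 \<le> ln Q" using QJ J1 by simp
  have lnJ: "0 \<le> ln J" using J1 by simp
  have Lam1: "1 \<le> Lam"
  proof -
    have Z1: "1 \<le> real m * real n / tau"
    proof -
      have "1 * 1 \<le> real m * real n" using m n by (intro mult_mono) auto
      then show ?thesis using tau tau1 by (simp add: le_divide_eq)
    qed
    have "exp 1 * 1 \<le> exp 1 * (real m * real n / tau)" by (rule mult_left_mono[OF Z1]) simp
    then have "ln (exp 1) \<le> ln (exp 1 * (real m * real n / tau))" by (intro ln_mono) auto
    then show ?thesis unfolding Lam_def by (simp add: mult.assoc)
  qed
  have Lb: "L \<le> 5 * (real (m-1) / real s + 3 + 4 * a * sqrt (real m) / real s + 8 * real (s-1) * w^2) * Lam"
    if s: "1 \<le> s" "s \<le> m" for s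
  proof -
    interpret C: cov m n u v t tau s by unfold_locales (use m n u v t tau tau1 s in auto)
    have e1: "4 * u * sqrt (real m * real n) / (real s * tau) = 4 * a * sqrt (real m) / real s"
      unfolding a_def by (simp add: real_sqrt_mult mult_ac)
    have e2: "v^2 / tau^2 = w^2" unfolding w_def by (simp add: power_divide)
    have e3: "8 * real (s-1) * v^2 / tau^2 = 8 * real (s-1) * w^2" unfolding e2[symmetric] by simp
    have pr: "C.Pr + 1 = real (m-1) / real s + 3 + 4 * a * sqrt (real m) / real s + 8 * real (s-1) * w^2"
      unfolding C.Pr_def e1 e3 by simp
    have f: "L \<le> 5 * (C.Pr + 1) * Lam" unfolding L_def Lam_def by (rule C.final_cov)
    show ?thesis using f unfolding pr .
  qed
  have goal: "(k < m \<longrightarrow> L \<le> 100 * Q * (ln Q + Lam)) \<and> (k = m \<longrightarrow> L \<le> 100 * J * (ln J + Lam))"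
  proof (intro conjI impI)
    assume km': "k < m"
    obtain s where s: "1 \<le> s" "s \<le> m"
      and Bs: "real (m-1) / real s + 3 + 4 * a * sqrt (real m) / real s + 8 * real (s-1) * w^2
        \<le> 19 * J0 + 16 * sqrt J0 * X"
      using choose_s[OF k1 km' a0 w0] unfolding J0_def X_def by blast
    have "L \<le> 5 * (real (m-1) / real s + 3 + 4 * a * sqrt (real m) / real s + 8 * real (s-1) * w^2) * Lam"
      by (rule Lb[OF s])
    also have "\<dots> \<le> 5 * (19 * J0 + 16 * sqrt J0 * X) * Lam" using Bs Lam1 by (intro mult_right_mono) auto
    also have "\<dots> \<le> 100 * Q * Lam"
    proof -
      have "sqrt J0 * X \<le> sqrt J * X" using sJ X0 by (intro mult_right_mono) auto
      moreover have "0 \<le> sqrt J0 * X" using X0 J01 by simp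
      moreover have "5 * (19 * J0 + 16 * sqrt J0 * X) = 95 * J0 + 80 * (sqrt J0 * X)" by (simp add: algebra_simps)
      moreover have "100 * Q = 100 * J + 100 * (sqrt J * X)" unfolding QX by (simp add: algebra_simps)
      ultimately have "5 * (19 * J0 + 16 * sqrt J0 * X) \<le> 100 * Q" using J100 J01 by linarith
      then show ?thesis using Lam1 by (intro mult_right_mono) auto
    qed
    also have "\<dots> \<le> 100 * Q * (ln Q + Lam)" using lnQ QJ J1 by (intro mult_left_mono) auto
    finally show "L \<le> 100 * Q * (ln Q + Lam)" .
  next
    assume kem: "k = m"
    have "L \<le> 5 * (real (m-1) / real 1 + 3 + 4 * a * sqrt (real m) / real 1 + 8 * real (1-1) * w^2) * Lam"
      by (rule Lb) (use m in auto)
    also have "\<dots> \<le> 5 * (4 * J0) * Lam"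
    proof -
      have "real (m-1) + 3 \<le> 4 * real m" using m by simp
      then have "real (m-1) / real 1 + 3 + 4 * a * sqrt (real m) / real 1 + 8 * real (1-1) * w^2 \<le> 4 * J0"
        unfolding J0_def kem by simp
      then show ?thesis using Lam1 by (intro mult_right_mono) auto
    qed
    also have "\<dots> \<le> 100 * J * Lam" using J100 Lam1 J01 by (intro mult_right_mono) auto
    also have "\<dots> \<le> 100 * J * (ln J + Lam)" using lnJ J1 by (intro mult_left_mono) auto
    finally show "L \<le> 100 * J * (ln J + Lam)" .
  qed
  then show ?thesis unfolding Let_def J_def[symmetric] L_def[symmetric] Q_def[symmetric] Lam_def[symmetric] .
qed

theorem lemma5p17:
  "\<exists>C>0. \<forall>(m::nat) (n::nat) (u::real) (v::real) (t::real) (\<tau>::real) (k::nat).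
     0 < m \<longrightarrow> 0 < n \<longrightarrow> 0 \<le> u \<longrightarrow> 0 \<le> v \<longrightarrow> t \<le> 1 \<longrightarrow> 0 < \<tau> \<longrightarrow> \<tau> \<le> 1 \<longrightarrow>
     1 \<le> k \<longrightarrow> k \<le> m \<longrightarrow>
     (let J = C * ln (exp 1 * real n) * (real k + u * sqrt (real n * real k) / \<tau>);
          L = ln (real (covnum m n (calA m n u v t) \<tau>));
          Q = J + sqrt J * (v * sqrt (real m)) / (\<tau> * sqrt (real k))
      in (k < m \<longrightarrow> L \<le> C * Q * (ln Q + ln (exp 1 * real m * real n / \<tau>))) \<and>
         (k = m \<longrightarrow> L \<le> C * J * (ln J + ln (exp 1 * real m * real n / \<tau>))))"
  apply (rule exI[of _ 100])
  apply (intro conjI allI impI)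
   apply simp
  apply (rule main_lemma)
          apply assumption+
  done



end
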